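(* Let $\mu>0$, $\beta\in[0,1]$, $x_0\in\mathbb R^n$ and $f\in\mathcal S^2_\mu(\mathbb R^n):=\bigcup_{L\ge\mu}\mathcal S^2_{\mu,L}(\mathbb R^n)$. For each $s>0$ the $\beta$-High Resolution ODE $$\ddot X_s+2\sqrt\mu\,\dot X_s+\beta\sqrt s\,\nabla^2 f(X_s)\dot X_s+(1+\sqrt{\mu s})\nabla f(X_s)=0,\quad X_s(0)=x_0,\ \dot X_s(0)=-\frac{2\sqrt s\,\nabla f(x_0)}{1+\sqrt{\mu s}},$$ has a unique global solution $X_s\in C^2([0,\infty);\mathbb R^n)$. Moreover, if $(x_k)_{k\ge0}$ (depending on $s$) is generated by $x_1=x_0-\frac{2s\nabla f(x_0)}{1+\sqrt{\mu s}}$ and, for $k\ge1$, $$x_{k+1}=x_k+\frac{1-\sqrt{\mu s}}{1+\sqrt{\mu s}}(x_k-x_{k-1})-s\nabla f(x_k)-\beta\frac{1-\sqrt{\mu s}}{1+\sqrt{\mu s}}s\big(\nabla f(x_k)-\nabla f(x_{k-1})\big),$$ then for any fixed $T>0$, $$\limsup_{s\to0}\max_{0\le k\le T/\sqrt s}\|x_k-X_s(k\sqrt s)\|=0.$$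
   Context: $\mathcal S^2_{\mu,L}(\mathbb R^n)$ is the class of twice differentiable, $\mu$-strongly convex functions $f:\mathbb R^n\to\mathbb R$ (i.e. $f(y)\ge f(x)+\langle\nabla f(x),y-x\rangle+\frac\mu2\|y-x\|^2$) whose gradient is $L$-Lipschitz and whose Hessian is Lipschitz in Frobenius norm ($\|\nabla^2f(x)-\nabla^2f(y)\|_F\le L'\|x-y\|$ for some $L'>0$), with $0<\mu\le L$. *)

theory Defs
  imports "HOL-Analysis.Analysis" "HOL-Library.Liminf_Limsup"
begin

text \<open>The norm on
  real^'n^'n is the Euclidean norm of all entries, i.e. the Frobenius norm.\<close>
definition S2_muL ::
  "real \<Rightarrow> real \<Rightarrow> (real^'n \<Rightarrow> real) \<Rightarrow> (real^'n \<Rightarrow> real^'n) \<Rightarrow> (real^'n \<Rightarrow> real^'n^'n) \<Rightarrow> bool"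
where
  "S2_muL \<mu> L f g H \<longleftrightarrow>
     0 < \<mu> \<and> \<mu> \<le> L \<and>
     (\<forall>x. (f has_derivative (\<lambda>h. g x \<bullet> h)) (at x)) \<and>
     (\<forall>x. (g has_derivative (\<lambda>h. H x *v h)) (at x)) \<and>
     (\<forall>x y. f y \<ge> f x + g x \<bullet> (y - x) + \<mu> / 2 * (norm (y - x))\<^sup>2) \<and>
     (\<forall>x y. norm (g x - g y) \<le> L * norm (x - y)) \<and>
     (\<exists>L'>0. \<forall>x y. norm (H x - H y) \<le> L' * norm (x - y))"

definition S2_mu ::
  "real \<Rightarrow> (real^'n \<Rightarrow> real) \<Rightarrow> (real^'n \<Rightarrow> real^'n) \<Rightarrow> (real^'n \<Rightarrow> real^'n^'n) \<Rightarrow> bool"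
where
  "S2_mu \<mu> f g H \<longleftrightarrow> (\<exists>L\<ge>\<mu>. S2_muL \<mu> L f g H)"

definition HR_solution ::
  "real \<Rightarrow> real \<Rightarrow> real \<Rightarrow> (real^'n \<Rightarrow> real^'n) \<Rightarrow> (real^'n \<Rightarrow> real^'n^'n) \<Rightarrow> real^'n
   \<Rightarrow> (real \<Rightarrow> real^'n) \<Rightarrow> bool"
where
  "HR_solution \<mu> \<beta> s g H x0 X \<longleftrightarrow>
     (\<exists>X' X''.
        (\<forall>t\<ge>0. (X has_vector_derivative X' t) (at t within {0..})) \<and>
        (\<forall>t\<ge>0. (X' has_vector_derivative X'' t) (at t within {0..})) \<and>
        continuous_on {0..} X'' \<and>
        (\<forall>t\<ge>0. X'' t + (2 * sqrt \<mu>) *\<^sub>R X' t + (\<beta> * sqrt s) *\<^sub>R (H (X t) *v X' t)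
                   + (1 + sqrt (\<mu> * s)) *\<^sub>R g (X t) = 0) \<and>
        X 0 = x0 \<and>
        X' 0 = - ((2 * sqrt s) / (1 + sqrt (\<mu> * s))) *\<^sub>R g x0)"

text \<open>Pairs (x_k, x_{k+1}) of the discrete scheme.\<close>
fun HR_pair ::
  "real \<Rightarrow> real \<Rightarrow> real \<Rightarrow> (real^'n \<Rightarrow> real^'n) \<Rightarrow> real^'n \<Rightarrow> nat \<Rightarrow> (real^'n) \<times> (real^'n)"
where
  "HR_pair \<mu> \<beta> s g x0 0 = (x0, x0 - ((2 * s) / (1 + sqrt (\<mu> * s))) *\<^sub>R g x0)"
| "HR_pair \<mu> \<beta> s g x0 (Suc k) =
     (let (xp, xk) = HR_pair \<mu> \<beta> s g x0 k;
          c = (1 - sqrt (\<mu> * s)) / (1 + sqrt (\<mu> * s))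
      in (xk, xk + c *\<^sub>R (xk - xp) - s *\<^sub>R g xk - (\<beta> * c * s) *\<^sub>R (g xk - g xp)))"

definition HR_seq ::
  "real \<Rightarrow> real \<Rightarrow> real \<Rightarrow> (real^'n \<Rightarrow> real^'n) \<Rightarrow> real^'n \<Rightarrow> nat \<Rightarrow> real^'n"
where
  "HR_seq \<mu> \<beta> s g x0 k = fst (HR_pair \<mu> \<beta> s g x0 k)"

end

theory Submission
  imports Defs
begin


lemma exp_int_bound:
  fixes G :: "real \<Rightarrow> 'a::banach"
  assumes u: "0 \<le> u" and lam: "lam > 0" and cG: "continuous_on {0..u} G"
    and b: "\<And>\<tau>. \<tau> \<in> {0..u} \<Longrightarrow> norm (G \<tau>) \<le> A * exp (lam*\<tau>)"
  shows "norm (integral {0..u} G) \<le> A * (exp (lam*u) - 1) / lam"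
proof -
  have d: "((\<lambda>\<tau>. A * exp (lam*\<tau>) / lam) has_vector_derivative A * exp (lam*x)) (at x within {0..u})" for x
  proof -
    have "((\<lambda>\<tau>. A * exp (lam*\<tau>) / lam) has_real_derivative A * (exp (lam*x) * lam) / lam) (at x within {0..u})"
      by (auto intro!: derivative_eq_intros)
    then show ?thesis using lam by (simp add: has_real_derivative_iff_has_vector_derivative)
  qed
  have hi: "((\<lambda>\<tau>. A * exp (lam*\<tau>)) has_integral (A * exp (lam*u) / lam - A * exp (lam*0) / lam)) {0..u}"
    by (rule fundamental_theorem_of_calculus[OF u]) (use d in auto)
  have "norm (integral {0..u} G) \<le> integral {0..u} (\<lambda>\<tau>. A * exp (lam*\<tau>))"
    by (rule integral_norm_bound_integral) (use integrable_continuous_interval[OF cG] hi b in auto)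
  also have "\<dots> = A * (exp (lam*u) - 1) / lam" using integral_unique[OF hi] lam by (simp add: field_simps)
  finally show ?thesis .
qed

lemma exp_weight_le:
  fixes u lam A B :: real
  assumes "0 \<le> u" "lam > 0" "0 \<le> A"
  shows "exp (-lam*u) * (B + A * (exp (lam*u) - 1) / lam) \<le> exp (-lam*u) * B + A / lam"
proof -
  have e: "exp (-lam*u) * exp (lam*u) = 1"
  proof -
    have "exp (-lam*u) * exp (lam*u) = exp (-lam*u + lam*u)" by (rule exp_add[symmetric])
    then show ?thesis by simp
  qed
  have "exp (-lam*u) * (A * (exp (lam*u) - 1) / lam) = A * (1 - exp (-lam*u)) / lam"
    using e by (simp add: field_simps)
  also have "\<dots> \<le> A / lam"
  proof -
    have m: "A * (1 - exp (-lam*u)) \<le> A * 1" by (rule mult_left_mono) (use assms in simp_all)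
    show ?thesis using divide_right_mono[OF m less_imp_le[OF assms(2)]] by simp
  qed
  finally show ?thesis by (simp add: distrib_left)
qed

definition Qop :: "('a::banach \<Rightarrow> 'a) \<Rightarrow> real \<Rightarrow> (real \<Rightarrow> real) \<Rightarrow> 'a \<Rightarrow> (real \<Rightarrow> 'a) \<Rightarrow> real \<Rightarrow> 'a" where
  "Qop F lam c z0 \<phi> t = exp (-lam * c t) *\<^sub>R (z0 + integral {0..c t} (\<lambda>\<tau>. F (exp (lam*\<tau>) *\<^sub>R \<phi> \<tau>)))"

locale lipF =
  fixes F :: "'a::banach \<Rightarrow> 'a" and K :: real
  assumes Kpos: "K > 0" and lip: "\<And>x y. norm (F x - F y) \<le> K * norm (x - y)"
begin

lemma F_cont: "continuous_on S F"
proof (rule lipschitz_on_continuous_on)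
  show "K-lipschitz_on S F" by (rule lipschitz_onI) (use lip Kpos in \<open>auto simp: dist_norm\<close>)
qed

lemma G_cont: "continuous_on S \<phi> \<Longrightarrow> continuous_on S (\<lambda>\<tau>. F (exp (lam*\<tau>) *\<^sub>R \<phi> \<tau>))"
  by (intro continuous_on_compose2[OF F_cont[of UNIV]] continuous_intros) auto

lemma Q_bound:
  assumes c0: "0 \<le> c t" and cphi: "continuous_on UNIV \<phi>" and B: "\<And>t. norm (\<phi> t) \<le> B"
  shows "norm (Qop F (2*K) c z0 \<phi> t) \<le> norm z0 + (norm (F 0) + K * B) / (2*K)"
proof -
  let ?u = "c t"
  let ?G = "\<lambda>\<tau>. F (exp (2*K*\<tau>) *\<^sub>R \<phi> \<tau>)"
  have B0: "0 \<le> B" using B[of 0] norm_ge_zero order_trans by blast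
  have gb: "norm (?G \<tau>) \<le> (norm (F 0) + K * B) * exp (2*K*\<tau>)" if "\<tau> \<in> {0..?u}" for \<tau>
  proof -
    have e1: "1 \<le> exp (2*K*\<tau>)" using that Kpos by simp
    have "norm (?G \<tau>) \<le> norm (F 0) + norm (?G \<tau> - F 0)" using norm_triangle_sub[of "?G \<tau>" "F 0"] by simp
    also have "\<dots> \<le> norm (F 0) + K * norm (exp (2*K*\<tau>) *\<^sub>R \<phi> \<tau>)" using lip[of "exp (2*K*\<tau>) *\<^sub>R \<phi> \<tau>" 0] by simp
    also have "\<dots> = norm (F 0) + K * (exp (2*K*\<tau>) * norm (\<phi> \<tau>))" by simp
    also have "\<dots> \<le> norm (F 0) + K * (exp (2*K*\<tau>) * B)"
      using B[of \<tau>] Kpos by (simp add: mult_left_mono)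
    also have "\<dots> \<le> (norm (F 0) + K * B) * exp (2*K*\<tau>)"
    proof -
      have a: "norm (F 0) \<le> norm (F 0) * exp (2*K*\<tau>)" using mult_left_mono[OF e1 norm_ge_zero[of "F 0"]] by simp
      have b: "(norm (F 0) + K * B) * exp (2*K*\<tau>) = norm (F 0) * exp (2*K*\<tau>) + K * (exp (2*K*\<tau>) * B)"
        by (simp add: algebra_simps)
      show ?thesis using a b by linarith
    qed
    finally show ?thesis .
  qed
  have ib: "norm (integral {0..?u} ?G) \<le> (norm (F 0) + K * B) * (exp (2*K*?u) - 1) / (2*K)"
    by (rule exp_int_bound[OF c0 _ G_cont[OF continuous_on_subset[OF cphi]] gb]) (use Kpos in auto)
  have "norm (Qop F (2*K) c z0 \<phi> t) = exp (-(2*K)*?u) * norm (z0 + integral {0..?u} ?G)"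
    by (simp add: Qop_def)
  also have "\<dots> \<le> exp (-(2*K)*?u) * (norm z0 + (norm (F 0) + K * B) * (exp (2*K*?u) - 1) / (2*K))"
    by (intro mult_left_mono order.trans[OF norm_triangle_ineq]) (use ib in auto)
  also have "\<dots> \<le> exp (-(2*K)*?u) * norm z0 + (norm (F 0) + K * B) / (2*K)"
    by (rule exp_weight_le) (use c0 Kpos B0 in auto)
  also have "\<dots> \<le> norm z0 + (norm (F 0) + K * B) / (2*K)"
    using c0 Kpos by (simp add: mult_left_le_one_le)
  finally show ?thesis .
qed

lemma Q_contr:
  assumes c0: "0 \<le> c t" and c1: "continuous_on UNIV \<phi>1" and c2: "continuous_on UNIV \<phi>2"
    and D: "\<And>t. norm (\<phi>1 t - \<phi>2 t) \<le> D"
  shows "norm (Qop F (2*K) c z0 \<phi>1 t - Qop F (2*K) c z0 \<phi>2 t) \<le> D / 2"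
proof -
  let ?u = "c t"
  let ?G1 = "\<lambda>\<tau>. F (exp (2*K*\<tau>) *\<^sub>R \<phi>1 \<tau>)"
  let ?G2 = "\<lambda>\<tau>. F (exp (2*K*\<tau>) *\<^sub>R \<phi>2 \<tau>)"
  have D0: "0 \<le> D" using D[of 0] norm_ge_zero order_trans by blast
  have i1: "?G1 integrable_on {0..?u}" by (rule integrable_continuous_interval, rule G_cont, rule continuous_on_subset[OF c1]) auto
  have i2: "?G2 integrable_on {0..?u}" by (rule integrable_continuous_interval, rule G_cont, rule continuous_on_subset[OF c2]) auto
  have gb: "norm (?G1 \<tau> - ?G2 \<tau>) \<le> (K * D) * exp (2*K*\<tau>)" for \<tau>
  proof -
    have "norm (?G1 \<tau> - ?G2 \<tau>) \<le> K * norm (exp (2*K*\<tau>) *\<^sub>R \<phi>1 \<tau> - exp (2*K*\<tau>) *\<^sub>R \<phi>2 \<tau>)" by (rule lip)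
    also have "\<dots> = K * (exp (2*K*\<tau>) * norm (\<phi>1 \<tau> - \<phi>2 \<tau>))"
      by (simp add: scaleR_diff_right[symmetric])
    also have "\<dots> \<le> K * (exp (2*K*\<tau>) * D)" using D[of \<tau>] Kpos by (simp add: mult_left_mono)
    finally show ?thesis by (simp add: algebra_simps)
  qed
  have cd: "continuous_on {0..?u} (\<lambda>\<tau>. ?G1 \<tau> - ?G2 \<tau>)"
    by (intro continuous_intros G_cont continuous_on_subset[OF c1] continuous_on_subset[OF c2]) auto
  have ib: "norm (integral {0..?u} (\<lambda>\<tau>. ?G1 \<tau> - ?G2 \<tau>)) \<le> (K * D) * (exp (2*K*?u) - 1) / (2*K)"
    by (rule exp_int_bound[OF c0 _ cd]) (use Kpos gb in auto)
  have "Qop F (2*K) c z0 \<phi>1 t - Qop F (2*K) c z0 \<phi>2 t = exp (-(2*K)*?u) *\<^sub>R integral {0..?u} (\<lambda>\<tau>. ?G1 \<tau> - ?G2 \<tau>)"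
    unfolding Qop_def integral_diff[OF i1 i2] by (simp add: algebra_simps)
  then have "norm (Qop F (2*K) c z0 \<phi>1 t - Qop F (2*K) c z0 \<phi>2 t) = exp (-(2*K)*?u) * norm (integral {0..?u} (\<lambda>\<tau>. ?G1 \<tau> - ?G2 \<tau>))"
    by simp
  also have "\<dots> \<le> exp (-(2*K)*?u) * (0 + (K * D) * (exp (2*K*?u) - 1) / (2*K))"
    by (intro mult_left_mono) (use ib in auto)
  also have "\<dots> \<le> exp (-(2*K)*?u) * 0 + (K * D) / (2*K)"
    by (rule exp_weight_le) (use c0 Kpos D0 in auto)
  also have "\<dots> = D / 2" using Kpos by simp
  finally show ?thesis .
qed

end


lemma cont_int0:
  fixes G :: "real \<Rightarrow> 'a::banach"
  assumes "continuous_on {0..} G"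
  shows "continuous_on {0..} (\<lambda>u. integral {0..u} G)"
proof (clarsimp simp: continuous_on_eq_continuous_within)
  fix u :: real assume u: "0 \<le> u"
  have "continuous_on {0..u+1} (\<lambda>u. integral {0..u} G)"
    by (rule indefinite_integral_continuous_1, rule integrable_continuous_interval,
        rule continuous_on_subset[OF assms]) auto
  then have "continuous (at u within {0..u+1}) (\<lambda>u. integral {0..u} G)"
    using u by (simp add: continuous_on_eq_continuous_within)
  moreover have "at u within {0..} = at u within {0..u+1}"
    by (rule at_within_nhd[where S="{..<u+1}"]) auto
  ultimately show "continuous (at u within {0..}) (\<lambda>u. integral {0..u} G)" by simp
qed

lemma int_deriv:
  fixes G :: "real \<Rightarrow> 'a::banach"
  assumes "continuous_on {0..} G" "0 \<le> t"
  shows "((\<lambda>u. integral {0..u} G) has_vector_derivative G t) (at t within {0..})"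
proof -
  have "((\<lambda>u. integral {0..u} G) has_vector_derivative G t) (at t within {0..t+1})"
    by (rule integral_has_vector_derivative, rule continuous_on_subset[OF assms(1)]) (use assms in auto)
  moreover have "at t within {0..} = at t within {0..t+1}"
    by (rule at_within_nhd[where S="{..<t+1}"]) auto
  ultimately show ?thesis by simp
qed

lemma deriv_to_int:
  fixes z :: "real \<Rightarrow> 'a::banach"
  assumes "\<And>t. 0 \<le> t \<Longrightarrow> (z has_vector_derivative G t) (at t within {0..})" "0 \<le> t"
  shows "z t = z 0 + integral {0..t} G"
proof -
  have "(G has_integral (z t - z 0)) {0..t}"
  proof (rule fundamental_theorem_of_calculus[OF assms(2)])
    fix x assume x: "x \<in> {0..t}"
    then have "(z has_vector_derivative G x) (at x within {0..})" using assms(1) by simp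
    then show "(z has_vector_derivative G x) (at x within {0..t})"
      by (rule has_vector_derivative_within_subset) auto
  qed
  then show ?thesis by (simp add: integral_unique)
qed

definition isol :: "('a::banach \<Rightarrow> 'a) \<Rightarrow> 'a \<Rightarrow> (real \<Rightarrow> 'a) \<Rightarrow> bool" where
  "isol F z0 z \<longleftrightarrow> continuous_on {0..} z \<and> (\<forall>t\<ge>0. z t = z0 + integral {0..t} (\<lambda>\<tau>. F (z \<tau>)))"

context lipF
begin

lemma Q_in_bcontfun:
  assumes cc: "continuous_on UNIV c" and c0: "\<And>t. 0 \<le> c t"
  shows "Qop F (2*K) c z0 (apply_bcontfun \<phi>) \<in> bcontfun"
proof (rule bcontfun_normI)
  let ?G = "\<lambda>\<tau>. F (exp (2*K*\<tau>) *\<^sub>R apply_bcontfun \<phi> \<tau>)"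
  have ci: "continuous_on {0..} (\<lambda>u. integral {0..u} ?G)"
    by (rule cont_int0, rule G_cont) simp
  have "continuous_on UNIV (\<lambda>t. integral {0..c t} ?G)"
    by (rule continuous_on_compose2[OF ci cc]) (use c0 in auto)
  then show "continuous_on UNIV (Qop F (2*K) c z0 (apply_bcontfun \<phi>))"
    unfolding Qop_def by (intro continuous_intros cc)
  show "norm (Qop F (2*K) c z0 (apply_bcontfun \<phi>) t) \<le> norm z0 + (norm (F 0) + K * norm \<phi>) / (2*K)" for t
    by (rule Q_bound, rule c0) (auto simp: norm_bounded)
qed

lemma fix_ex1:
  assumes cc: "continuous_on UNIV c" and c0: "\<And>t. 0 \<le> c t"
  shows "\<exists>!\<phi>::real \<Rightarrow>\<^sub>C 'a. Qop F (2*K) c z0 (apply_bcontfun \<phi>) = apply_bcontfun \<phi>"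
proof -
  define Qb where "Qb \<phi> = Bcontfun (Qop F (2*K) c z0 (apply_bcontfun \<phi>))" for \<phi> :: "real \<Rightarrow>\<^sub>C 'a"
  have aQ: "apply_bcontfun (Qb \<phi>) = Qop F (2*K) c z0 (apply_bcontfun \<phi>)" for \<phi>
    unfolding Qb_def by (rule Bcontfun_inverse[OF Q_in_bcontfun[OF cc c0]])
  have "\<exists>!x. Qb x = x"
  proof (rule banach_fix_type[of "1/2"])
    show "\<forall>x y. dist (Qb x) (Qb y) \<le> 1 / 2 * dist x y"
    proof (intro allI)
      fix x y :: "real \<Rightarrow>\<^sub>C 'a"
      show "dist (Qb x) (Qb y) \<le> 1 / 2 * dist x y"
      proof (rule dist_bound)
        fix t
        have "norm (Qop F (2*K) c z0 (apply_bcontfun x) t - Qop F (2*K) c z0 (apply_bcontfun y) t) \<le> dist x y / 2"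
          by (rule Q_contr, rule c0) (auto simp: dist_norm[symmetric] dist_bounded)
        then show "dist (apply_bcontfun (Qb x) t) (apply_bcontfun (Qb y) t) \<le> 1 / 2 * dist x y"
          by (simp add: aQ dist_norm)
      qed
    qed
  qed auto
  moreover have "Qb x = x \<longleftrightarrow> Qop F (2*K) c z0 (apply_bcontfun x) = apply_bcontfun x" for x
  proof
    assume "Qb x = x" then show "Qop F (2*K) c z0 (apply_bcontfun x) = apply_bcontfun x" using aQ[of x] by simp
  next
    assume "Qop F (2*K) c z0 (apply_bcontfun x) = apply_bcontfun x"
    then show "Qb x = x" unfolding Qb_def by (simp add: apply_bcontfun_inverse)
  qed
  ultimately show ?thesis by simp
qed

lemma fix_unique:
  assumes cc: "continuous_on UNIV c" and c0: "\<And>t. 0 \<le> c t"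
    and p1: "continuous_on UNIV \<psi>1" "bounded (range \<psi>1)" "Qop F (2*K) c z0 \<psi>1 = \<psi>1"
    and p2: "continuous_on UNIV \<psi>2" "bounded (range \<psi>2)" "Qop F (2*K) c z0 \<psi>2 = \<psi>2"
  shows "\<psi>1 = \<psi>2"
proof -
  have a1: "apply_bcontfun (Bcontfun \<psi>1) = \<psi>1" using p1 by (intro Bcontfun_inverse) (simp add: bcontfun_def)
  have a2: "apply_bcontfun (Bcontfun \<psi>2) = \<psi>2" using p2 by (intro Bcontfun_inverse) (simp add: bcontfun_def)
  obtain \<phi> where "Qop F (2*K) c z0 (apply_bcontfun \<phi>) = apply_bcontfun \<phi>"
    and u: "\<And>y. Qop F (2*K) c z0 (apply_bcontfun y) = apply_bcontfun y \<Longrightarrow> y = \<phi>"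
    using fix_ex1[OF cc c0, of z0] by blast
  have "Bcontfun \<psi>1 = \<phi>" by (rule u) (simp add: a1 p1(3))
  moreover have "Bcontfun \<psi>2 = \<phi>" by (rule u) (simp add: a2 p2(3))
  ultimately have "Bcontfun \<psi>1 = Bcontfun \<psi>2" by simp
  then have "apply_bcontfun (Bcontfun \<psi>1) = apply_bcontfun (Bcontfun \<psi>2)" by simp
  then show ?thesis using a1 a2 by simp
qed

lemma fix_bound:
  assumes c0: "\<And>t. 0 \<le> c t"
    and p: "continuous_on UNIV \<psi>" "bounded (range \<psi>)" "Qop F (2*K) c z0 \<psi> = \<psi>"
  shows "norm (\<psi> t) \<le> 2 * norm z0 + norm (F 0) / K"
proof -
  have a: "apply_bcontfun (Bcontfun \<psi>) = \<psi>" using p by (intro Bcontfun_inverse) (simp add: bcontfun_def)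
  let ?n = "norm (Bcontfun \<psi>)"
  have "?n \<le> norm z0 + (norm (F 0) + K * ?n) / (2*K)"
  proof (rule norm_bound)
    fix t
    have "norm (Qop F (2*K) c z0 \<psi> t) \<le> norm z0 + (norm (F 0) + K * ?n) / (2*K)"
      by (rule Q_bound, rule c0) (use p a norm_bounded[of "Bcontfun \<psi>"] in auto)
    then show "norm (apply_bcontfun (Bcontfun \<psi>) t) \<le> norm z0 + (norm (F 0) + K * ?n) / (2*K)"
      using a p(3) by simp
  qed
  then have "?n \<le> 2 * norm z0 + norm (F 0) / K" using Kpos by (simp add: field_simps)
  moreover have "norm (\<psi> t) \<le> ?n" using norm_bounded[of "Bcontfun \<psi>" t] a by simp
  ultimately show ?thesis by simp
qed


lemma isol_exists: "\<exists>z. isol F z0 z \<and> continuous_on UNIV z"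
proof -
  let ?c = "\<lambda>t::real. max 0 t"
  have cc: "continuous_on UNIV ?c" by (intro continuous_intros)
  obtain \<phi> :: "real \<Rightarrow>\<^sub>C 'a" where fx: "Qop F (2*K) ?c z0 (apply_bcontfun \<phi>) = apply_bcontfun \<phi>"
  proof -
    have c0: "\<And>t. 0 \<le> ?c t" by simp
    show ?thesis using ex1_implies_ex[OF fix_ex1[OF cc c0, of z0]] that by blast
  qed
  define z where "z t = exp (2*K*t) *\<^sub>R apply_bcontfun \<phi> t" for t
  have cz: "continuous_on UNIV z" unfolding z_def by (intro continuous_intros) auto
  have "z t = z0 + integral {0..t} (\<lambda>\<tau>. F (z \<tau>))" if t: "t \<ge> 0" for t
  proof -
    have "apply_bcontfun \<phi> t = Qop F (2*K) ?c z0 (apply_bcontfun \<phi>) t" using fx by simp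
    also have "\<dots> = exp (-(2*K)*t) *\<^sub>R (z0 + integral {0..t} (\<lambda>\<tau>. F (z \<tau>)))"
      using t by (simp add: Qop_def z_def)
    finally have "z t = exp (2*K*t) *\<^sub>R (exp (-(2*K)*t) *\<^sub>R (z0 + integral {0..t} (\<lambda>\<tau>. F (z \<tau>))))"
      by (simp add: z_def)
    also have "\<dots> = z0 + integral {0..t} (\<lambda>\<tau>. F (z \<tau>))"
      by (simp add: exp_minus_inverse)
    finally show ?thesis .
  qed
  then show ?thesis using cz continuous_on_subset[OF cz] unfolding isol_def by blast
qed

lemma isol_clamp:
  assumes z: "isol F z0 z" and N: "0 \<le> N"
  defines "c \<equiv> \<lambda>t. max 0 (min N t)"
  defines "\<psi> \<equiv> \<lambda>t. exp (-(2*K) * c t) *\<^sub>R z (c t)"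
  shows "continuous_on UNIV c" "\<And>t. 0 \<le> c t" "continuous_on UNIV \<psi>" "bounded (range \<psi>)"
    "Qop F (2*K) c z0 \<psi> = \<psi>"
proof -
  show cc: "continuous_on UNIV c" unfolding c_def by (intro continuous_intros)
  show c0: "0 \<le> c t" for t unfolding c_def by simp
  have zc: "continuous_on {0..} z" using z by (simp add: isol_def)
  have cz: "continuous_on UNIV (\<lambda>t. z (c t))"
    by (rule continuous_on_compose2[OF zc cc]) (use c0 in auto)
  show "continuous_on UNIV \<psi>" unfolding \<psi>_def by (intro continuous_intros cz cc)
  have "range \<psi> \<subseteq> (\<lambda>u. exp (-(2*K) * u) *\<^sub>R z u) ` {0..N}"
    unfolding \<psi>_def c_def using N by auto
  moreover have "compact ((\<lambda>u. exp (-(2*K) * u) *\<^sub>R z u) ` {0..N})"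
    by (rule compact_continuous_image, intro continuous_intros continuous_on_subset[OF zc]) auto
  ultimately show "bounded (range \<psi>)" by (meson bounded_subset compact_imp_bounded)
  show "Qop F (2*K) c z0 \<psi> = \<psi>"
  proof
    fix t
    have "integral {0..c t} (\<lambda>\<tau>. F (exp (2*K*\<tau>) *\<^sub>R \<psi> \<tau>)) = integral {0..c t} (\<lambda>\<tau>. F (z \<tau>))"
    proof (rule integral_cong)
      fix \<tau> assume "\<tau> \<in> {0..c t}"
      then have "c \<tau> = \<tau>" unfolding c_def by auto
      then show "F (exp (2*K*\<tau>) *\<^sub>R \<psi> \<tau>) = F (z \<tau>)"
        unfolding \<psi>_def by (simp add: exp_minus_inverse)
    qed
    moreover have "z (c t) = z0 + integral {0..c t} (\<lambda>\<tau>. F (z \<tau>))" using z c0[of t] by (simp add: isol_def)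
    ultimately show "Qop F (2*K) c z0 \<psi> t = \<psi> t" unfolding Qop_def \<psi>_def by simp
  qed
qed

lemma isol_unique:
  assumes "isol F z0 z1" "isol F z0 z2" "0 \<le> t"
  shows "z1 t = z2 t"
proof -
  let ?c = "\<lambda>s. max 0 (min t s)"
  note A = isol_clamp[OF assms(1) assms(3)]
  note B = isol_clamp[OF assms(2) assms(3)]
  have "(\<lambda>s. exp (-(2*K) * ?c s) *\<^sub>R z1 (?c s)) = (\<lambda>s. exp (-(2*K) * ?c s) *\<^sub>R z2 (?c s))"
    by (rule fix_unique[OF A(1,2,3,4,5) B(3,4,5)])
  from fun_cong[OF this, of t] have "exp (-(2*K) * t) *\<^sub>R z1 t = exp (-(2*K) * t) *\<^sub>R z2 t"
    using assms(3) by simp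
  then show ?thesis by simp
qed

lemma isol_bound:
  assumes "isol F z0 z" "0 \<le> t"
  shows "norm (z t) \<le> (2 * norm z0 + norm (F 0) / K) * exp (2*K*t)"
proof -
  note A = isol_clamp[OF assms(1) assms(2)]
  have "norm (exp (-(2*K) * max 0 (min t t)) *\<^sub>R z (max 0 (min t t))) \<le> 2 * norm z0 + norm (F 0) / K"
    by (rule fix_bound[OF A(2,3,4,5)])
  then have "exp (-(2*K) * t) * norm (z t) \<le> 2 * norm z0 + norm (F 0) / K" using assms(2) by simp
  then have m: "exp (2*K*t) * (exp (-(2*K) * t) * norm (z t)) \<le> exp (2*K*t) * (2 * norm z0 + norm (F 0) / K)"
    by (simp add: mult_left_mono)
  have e: "exp (2*K*t) * exp (-(2*K) * t) = 1"
  proof -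
    have "exp (2*K*t) * exp (-(2*K) * t) = exp (2*K*t + -(2*K) * t)" by (rule exp_add[symmetric])
    then show ?thesis by simp
  qed
  have "norm (z t) = (exp (2*K*t) * exp (-(2*K) * t)) * norm (z t)" unfolding e by simp
  also have "\<dots> = exp (2*K*t) * (exp (-(2*K) * t) * norm (z t))" by (rule mult.assoc)
  also have "\<dots> \<le> exp (2*K*t) * (2 * norm z0 + norm (F 0) / K)" by (rule m)
  also have "\<dots> = (2 * norm z0 + norm (F 0) / K) * exp (2*K*t)" by (rule mult.commute)
  finally show ?thesis .
qed

end


lemma disc_gronwall:
  fixes E :: "nat \<Rightarrow> real"
  assumes E0: "E 0 \<le> 0" and q: "1 \<le> q" and C: "0 \<le> C"
    and step: "\<And>k. real (Suc k) * h \<le> T \<Longrightarrow> E (Suc k) \<le> q * E k + C"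
    and h: "0 \<le> h"
  shows "real k * h \<le> T \<Longrightarrow> E k \<le> real k * C * q ^ k"
proof (induction k)
  case 0 then show ?case using E0 by simp
next
  case (Suc k)
  have "real k * h \<le> T" using Suc.prems h by (smt (verit) mult_right_mono of_nat_Suc)
  then have IH: "E k \<le> real k * C * q ^ k" by (rule Suc.IH)
  have q1: "1 \<le> q ^ Suc k" using one_le_power[OF q] by blast
  have "E (Suc k) \<le> q * E k + C" using step Suc.prems by blast
  also have "\<dots> \<le> q * (real k * C * q ^ k) + C" using IH q by (simp add: mult_left_mono)
  also have "\<dots> = real k * C * q ^ Suc k + C" by simp
  also have "\<dots> \<le> real k * C * q ^ Suc k + C * q ^ Suc k" using mult_left_mono[OF q1 C] by simp
  also have "\<dots> = real (Suc k) * C * q ^ Suc k" by (simp add: algebra_simps)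
  finally show ?case .
qed

lemma disc_core:
  fixes g :: "'v::real_normed_vector \<Rightarrow> 'v" and X W :: "real \<Rightarrow> 'v" and x v :: "nat \<Rightarrow> 'v"
  assumes h: "0 < h" "h \<le> 1" and L: "0 \<le> L" and glip: "\<And>u w. norm (g u - g w) \<le> L * norm (u - w)"
    and \<beta>: "0 \<le> \<beta>" "\<beta> \<le> 1"
    and H1: "\<And>k. real (Suc k) * h \<le> T \<Longrightarrow>
       norm (X (real (Suc k) * h) - X (real k * h) - h *\<^sub>R (W (real k * h) - (\<beta>*h) *\<^sub>R g (X (real k * h)))) \<le> Ct * h\<^sup>2"
    and H2: "\<And>k. real (Suc k) * h \<le> T \<Longrightarrow>
       norm (W (real (Suc k) * h) - W (real k * h) - h *\<^sub>R (a *\<^sub>R g (X (real (Suc k) * h)) - p *\<^sub>R W (real k * h))) \<le> Cs * h\<^sup>2"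
    and H3: "\<And>t. 0 \<le> t \<Longrightarrow> t \<le> T \<Longrightarrow> norm (W t) \<le> M0 \<and> norm (g (X t)) \<le> M1"
    and cb: "\<bar>c\<bar> \<le> 1" "\<bar>b\<bar> \<le> 1" "\<bar>c - 1 + h * p\<bar> \<le> Cc * h\<^sup>2" "\<bar>a + b\<bar> \<le> Cab * h"
    and cst: "0 \<le> Ct" "0 \<le> Cs" "0 \<le> M0" "0 \<le> M1" "0 \<le> Cc" "0 \<le> Cab"
    and xs: "\<And>k. x (Suc k) = x k + h *\<^sub>R v k - (\<beta>*h\<^sup>2) *\<^sub>R g (x k)"
    and vs: "\<And>k. v (Suc k) = c *\<^sub>R v k - (h*b) *\<^sub>R g (x (Suc k))"
    and init: "x 0 = X 0" "v 0 = W 0"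
    and k: "real k * h \<le> T"
  shows "norm (x k - X (real k * h)) \<le> T * ((1+L)*Ct + Cc*M0 + Cab*M1 + Cs) * exp ((1 + 2*L + L\<^sup>2) * T) * h"
proof -
  define ex where "ex k = x k - X (real k * h)" for k
  define ev where "ev k = v k - W (real k * h)" for k
  define Q where "Q = 1 + 2*L + L\<^sup>2"
  define C3 where "C3 = (1+L)*Ct + Cc*M0 + Cab*M1 + Cs"
  define E where "E k = norm (ex k) + norm (ev k)" for k
  have Q0: "0 \<le> Q" unfolding Q_def using L by simp
  have C30: "0 \<le> C3" unfolding C3_def using cst L by simp
  have hh: "h\<^sup>2 \<le> h" using h by (simp add: power2_eq_square mult_left_le_one_le)
  have bh: "\<beta>*h\<^sup>2 \<le> h" using mult_mono[of \<beta> 1 "h\<^sup>2" h] \<beta> hh h by simp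
  have step: "E (Suc k) \<le> (1 + h*Q) * E k + C3 * h\<^sup>2" if sk: "real (Suc k) * h \<le> T" for k
  proof -
    let ?t = "real k * h" and ?t' = "real (Suc k) * h"
    have t0: "0 \<le> ?t" "?t \<le> T" "0 \<le> ?t'" using sk h by (auto simp: algebra_simps)
    define \<tau> where "\<tau> = X ?t' - X ?t - h *\<^sub>R (W ?t - (\<beta>*h) *\<^sub>R g (X ?t))"
    define \<sigma> where "\<sigma> = W ?t' - W ?t - h *\<^sub>R (a *\<^sub>R g (X ?t') - p *\<^sub>R W ?t)"
    have \<tau>b: "norm \<tau> \<le> Ct * h\<^sup>2" unfolding \<tau>_def using H1[OF sk] .
    have \<sigma>b: "norm \<sigma> \<le> Cs * h\<^sup>2" unfolding \<sigma>_def using H2[OF sk] .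
    have ex_eq: "ex (Suc k) = ex k + h *\<^sub>R ev k - (\<beta>*h\<^sup>2) *\<^sub>R (g (x k) - g (X ?t)) - \<tau>"
      unfolding ex_def ev_def \<tau>_def xs by (simp add: algebra_simps power2_eq_square)
    have ev_eq: "ev (Suc k) = c *\<^sub>R ev k + (c - 1 + h*p) *\<^sub>R W ?t - (h*b) *\<^sub>R (g (x (Suc k)) - g (X ?t'))
        - (h*(a+b)) *\<^sub>R g (X ?t') - \<sigma>"
      unfolding ev_def \<sigma>_def vs by (simp add: algebra_simps)
    have gx: "norm (g (x k) - g (X ?t)) \<le> L * norm (ex k)" unfolding ex_def by (rule glip)
    have gx': "norm (g (x (Suc k)) - g (X ?t')) \<le> L * norm (ex (Suc k))" unfolding ex_def by (rule glip)
    have exb: "norm (ex (Suc k)) \<le> (1 + h*L) * norm (ex k) + h * norm (ev k) + Ct * h\<^sup>2"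
    proof -
      have "norm (ex (Suc k)) \<le> norm (ex k) + norm (h *\<^sub>R ev k) + norm ((\<beta>*h\<^sup>2) *\<^sub>R (g (x k) - g (X ?t))) + norm \<tau>"
        unfolding ex_eq by (intro order.trans[OF norm_triangle_ineq4] add_mono order.trans[OF norm_triangle_ineq4]
              order.trans[OF norm_triangle_ineq] order.refl)
      also have "norm ((\<beta>*h\<^sup>2) *\<^sub>R (g (x k) - g (X ?t))) \<le> h * L * norm (ex k)"
      proof -
        have "norm ((\<beta>*h\<^sup>2) *\<^sub>R (g (x k) - g (X ?t))) = (\<beta>*h\<^sup>2) * norm (g (x k) - g (X ?t))"
          using \<beta> by simp
        also have "\<dots> \<le> h * (L * norm (ex k))"
          by (rule mult_mono) (use \<beta> bh h gx in auto)
        finally show ?thesis by simp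
      qed
      finally show ?thesis using \<tau>b h by (simp add: algebra_simps)
    qed
    have evb: "norm (ev (Suc k)) \<le> norm (ev k) + h * L * norm (ex (Suc k)) + (Cc*M0 + Cab*M1 + Cs) * h\<^sup>2"
    proof -
      have W0: "norm (W ?t) \<le> M0" and G1: "norm (g (X ?t')) \<le> M1" using H3 t0 sk by auto
      have "norm (ev (Suc k)) \<le> norm (c *\<^sub>R ev k) + norm ((c - 1 + h*p) *\<^sub>R W ?t) + norm ((h*b) *\<^sub>R (g (x (Suc k)) - g (X ?t')))
        + norm ((h*(a+b)) *\<^sub>R g (X ?t')) + norm \<sigma>"
        unfolding ev_eq by (intro order.trans[OF norm_triangle_ineq4] add_mono order.trans[OF norm_triangle_ineq4]
              order.trans[OF norm_triangle_ineq] order.refl)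
      also have "norm (c *\<^sub>R ev k) \<le> norm (ev k)" using cb by (simp add: mult_left_le_one_le)
      also have "norm ((c - 1 + h*p) *\<^sub>R W ?t) \<le> Cc * h\<^sup>2 * M0"
        using cb(3) W0 by (simp add: mult_mono)
      also have "norm ((h*b) *\<^sub>R (g (x (Suc k)) - g (X ?t'))) \<le> h * L * norm (ex (Suc k))"
      proof -
        have "norm ((h*b) *\<^sub>R (g (x (Suc k)) - g (X ?t'))) = h * (\<bar>b\<bar> * norm (g (x (Suc k)) - g (X ?t')))"
          using h by (simp add: abs_mult)
        also have "\<dots> \<le> h * (1 * (L * norm (ex (Suc k))))"
          by (intro mult_left_mono mult_mono) (use h cb gx' in auto)
        finally show ?thesis by simp
      qed
      also have "norm ((h*(a+b)) *\<^sub>R g (X ?t')) \<le> Cab * h\<^sup>2 * M1"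
      proof -
        have "norm ((h*(a+b)) *\<^sub>R g (X ?t')) = h * (\<bar>a+b\<bar> * norm (g (X ?t')))"
          using h by (simp add: abs_mult)
        also have "\<dots> \<le> h * ((Cab * h) * M1)"
          by (intro mult_left_mono mult_mono) (use h cb G1 cst in auto)
        finally show ?thesis by (simp add: power2_eq_square algebra_simps)
      qed
      finally show ?thesis using \<sigma>b by (simp add: algebra_simps)
    qed
    have "E (Suc k) \<le> (1 + h*L) * norm (ex (Suc k)) + norm (ev k) + (Cc*M0 + Cab*M1 + Cs) * h\<^sup>2"
      unfolding E_def using evb by (simp add: algebra_simps)
    also have "\<dots> \<le> (1 + h*L) * ((1 + h*L) * norm (ex k) + h * norm (ev k) + Ct * h\<^sup>2) + norm (ev k) + (Cc*M0 + Cab*M1 + Cs) * h\<^sup>2"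
      by (intro add_mono mult_left_mono exb order.refl) (use h L in auto)
    also have "\<dots> = (1 + h*L)\<^sup>2 * norm (ex k) + (1 + h + h*h*L) * norm (ev k) + ((1 + h*L) * Ct + Cc*M0 + Cab*M1 + Cs) * h\<^sup>2"
      by (simp add: algebra_simps power2_eq_square)
    also have "\<dots> \<le> (1 + h*Q) * norm (ex k) + (1 + h*Q) * norm (ev k) + C3 * h\<^sup>2"
    proof -
      have "h*h*L\<^sup>2 \<le> h*L\<^sup>2" using h L by (simp add: mult_left_le_one_le)
      then have a1: "(1 + h*L)\<^sup>2 \<le> 1 + h*Q" unfolding Q_def using h by (simp add: algebra_simps power2_eq_square; linarith)
      have "h*h*L \<le> h*L" using h L by (simp add: mult_left_le_one_le)
      moreover have "0 \<le> h*L*L" "0 \<le> h*L" using h L by simp_all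
      moreover have "h*Q = h + 2*(h*L) + h*L*L" unfolding Q_def by (simp add: algebra_simps power2_eq_square)
      ultimately have a2: "1 + h + h*h*L \<le> 1 + h*Q" by linarith
      have "0 \<le> L*Ct" using L cst by simp
      then have "h*L*Ct \<le> L*Ct" using mult_right_mono[of h 1 "L*Ct"] h by (simp add: mult.assoc)
      then have "((1 + h*L) * Ct + Cc*M0 + Cab*M1 + Cs) \<le> C3"
        unfolding C3_def by (auto simp: algebra_simps)
      then have a3: "((1 + h*L) * Ct + Cc*M0 + Cab*M1 + Cs) * h\<^sup>2 \<le> C3 * h\<^sup>2"
        by (rule mult_right_mono) simp
      have b1: "(1 + h*L)\<^sup>2 * norm (ex k) \<le> (1 + h*Q) * norm (ex k)" using a1 by (rule mult_right_mono) simp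
      have b2: "(1 + h + h*h*L) * norm (ev k) \<le> (1 + h*Q) * norm (ev k)" using a2 by (rule mult_right_mono) simp
      show ?thesis using a3 b1 b2 by linarith
    qed
    finally show ?thesis unfolding E_def by (simp add: algebra_simps)
  qed
  have E0: "E 0 \<le> 0" unfolding E_def ex_def ev_def using init by simp
  have Ek: "E k \<le> real k * (C3 * h\<^sup>2) * (1 + h*Q) ^ k"
  proof -
    have "1 \<le> 1 + h*Q" using h Q0 by simp
    then show ?thesis
      by (intro disc_gronwall[where E=E and q="1+h*Q" and C="C3*h\<^sup>2" and h=h and T=T and k=k] E0 step)
         (use h C30 k in auto)
  qed
  have pw: "(1 + h*Q) ^ k \<le> exp (Q * T)"
  proof -
    have "(1 + h*Q) ^ k \<le> exp (h*Q) ^ k"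
      by (rule power_mono) (use h Q0 in auto)
    also have "\<dots> = exp (real k * h * Q)" by (simp add: exp_of_nat_mult[symmetric] algebra_simps)
    also have "\<dots> \<le> exp (Q * T)" using mult_left_mono[OF k Q0] by (simp add: algebra_simps)
    finally show ?thesis .
  qed
  have T0: "0 \<le> T" using mult_nonneg_nonneg[of "real k" h] h k by linarith
  have "norm (ex k) \<le> E k" unfolding E_def by simp
  also have "\<dots> \<le> real k * (C3 * h\<^sup>2) * (1 + h*Q) ^ k" by (rule Ek)
  also have "\<dots> = (real k * h) * C3 * (1 + h*Q) ^ k * h" by (simp add: power2_eq_square algebra_simps)
  also have "\<dots> \<le> T * C3 * exp (Q * T) * h"
    by (intro mult_right_mono mult_mono pw k) (use h C30 Q0 k T0 in auto)
  finally show ?thesis unfolding ex_def C3_def Q_def .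
qed



lemma int_const_bound:
  fixes f :: "real \<Rightarrow> 'a::banach"
  assumes ab: "a \<le> b" and cf: "continuous_on {a..b} f" and B: "\<And>x. x \<in> {a..b} \<Longrightarrow> norm (f x) \<le> B"
  shows "norm (integral {a..b} f) \<le> B * (b - a)"
proof -
  have i1: "f integrable_on {a..b}" by (rule integrable_continuous_interval[OF cf])
  have i2: "(\<lambda>_. B) integrable_on {a..b}" by (rule integrable_continuous_interval[OF continuous_on_const])
  have "norm (integral {a..b} f) \<le> integral {a..b} (\<lambda>_. B)"
    by (rule integral_norm_bound_integral[OF i1 i2 B])
  also have "integral {a..b} (\<lambda>_. B) = B * (b - a)" using ab by simp
  finally show ?thesis .
qed

context lipF
begin

lemma isol_cont:
  assumes z: "isol F z0 z" and t: "0 \<le> t"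
  shows "continuous_on {t..u} (\<lambda>\<tau>. F (z \<tau>))"
proof -
  have zc: "continuous_on {0..} z" using z by (simp add: isol_def)
  have "continuous_on {t..u} z" by (rule continuous_on_subset[OF zc]) (use t in auto)
  then show ?thesis by (rule continuous_on_compose2[OF F_cont[of UNIV]]) auto
qed

lemma isol_diff:
  assumes z: "isol F z0 z" and t: "0 \<le> t" "t \<le> u"
  shows "z u - z t = integral {t..u} (\<lambda>\<tau>. F (z \<tau>))"
proof -
  have cz: "continuous_on {0..u} (\<lambda>\<tau>. F (z \<tau>))" by (rule isol_cont[OF z]) simp
  have "integral {0..t} (\<lambda>\<tau>. F (z \<tau>)) + integral {t..u} (\<lambda>\<tau>. F (z \<tau>)) = integral {0..u} (\<lambda>\<tau>. F (z \<tau>))"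
    by (rule Henstock_Kurzweil_Integration.integral_combine[OF t(1) t(2) integrable_continuous_interval[OF cz]])
  moreover have "z u = z0 + integral {0..u} (\<lambda>\<tau>. F (z \<tau>))" "z t = z0 + integral {0..t} (\<lambda>\<tau>. F (z \<tau>))"
    using z t unfolding isol_def by auto
  ultimately show ?thesis by (metis add.assoc add_diff_cancel_left')
qed

lemma isol_lip:
  assumes z: "isol F z0 z" and t: "0 \<le> t" "t \<le> u" and M: "\<And>\<tau>. \<tau> \<in> {t..u} \<Longrightarrow> norm (F (z \<tau>)) \<le> M"
  shows "norm (z u - z t) \<le> M * (u - t)"
proof -
  have cz: "continuous_on {t..u} (\<lambda>\<tau>. F (z \<tau>))" by (rule isol_cont[OF z t(1)])
  show ?thesis unfolding isol_diff[OF z t] by (rule int_const_bound[OF t(2) cz M])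
qed

lemma isol_trunc:
  assumes z: "isol F z0 z" and t: "0 \<le> t" and h: "0 \<le> h" and M: "\<And>\<tau>. \<tau> \<in> {t..t+h} \<Longrightarrow> norm (F (z \<tau>)) \<le> M"
  shows "norm (z (t+h) - z t - h *\<^sub>R F (z t)) \<le> K * M * h\<^sup>2"
proof -
  have th: "t \<le> t + h" using h by simp
  have cz: "continuous_on {t..t+h} (\<lambda>\<tau>. F (z \<tau>))" by (rule isol_cont[OF z t])
  have "norm (F (z t)) \<le> M" by (rule M) (use h in simp)
  then have M0: "0 \<le> M" using norm_ge_zero[of "F (z t)"] by linarith
  have i1: "(\<lambda>\<tau>. F (z \<tau>)) integrable_on {t..t+h}" by (rule integrable_continuous_interval[OF cz])
  have i2: "(\<lambda>\<tau>. F (z t)) integrable_on {t..t+h}" by (rule integrable_continuous_interval[OF continuous_on_const])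
  have ic: "integral {t..t+h} (\<lambda>\<tau>. F (z t)) = h *\<^sub>R F (z t)" using h by simp
  have "z (t+h) - z t - h *\<^sub>R F (z t) = integral {t..t+h} (\<lambda>\<tau>. F (z \<tau>)) - integral {t..t+h} (\<lambda>\<tau>. F (z t))"
    unfolding ic isol_diff[OF z t th] ..
  also have "\<dots> = integral {t..t+h} (\<lambda>\<tau>. F (z \<tau>) - F (z t))"
    by (rule integral_diff[OF i1 i2, symmetric])
  finally have eq: "z (t+h) - z t - h *\<^sub>R F (z t) = integral {t..t+h} (\<lambda>\<tau>. F (z \<tau>) - F (z t))" .
  have cd: "continuous_on {t..t+h} (\<lambda>\<tau>. F (z \<tau>) - F (z t))" by (intro continuous_on_diff cz continuous_on_const)
  have bd: "norm (F (z \<tau>) - F (z t)) \<le> K * (M * h)" if \<tau>: "\<tau> \<in> {t..t+h}" for \<tau>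
  proof -
    have tt: "t \<le> \<tau>" using \<tau> by simp
    have "norm (z \<tau> - z t) \<le> M * (\<tau> - t)"
    proof (rule isol_lip[OF z t tt])
      fix s assume "s \<in> {t..\<tau>}"
      then show "norm (F (z s)) \<le> M" using \<tau> by (intro M) auto
    qed
    also have "\<dots> \<le> M * h" using \<tau> M0 by (intro mult_left_mono) auto
    finally have a: "norm (z \<tau> - z t) \<le> M * h" .
    have "K * norm (z \<tau> - z t) \<le> K * (M * h)" by (rule mult_left_mono[OF a]) (use Kpos in simp)
    then show ?thesis using lip[of "z \<tau>" "z t"] by linarith
  qed
  have "norm (integral {t..t+h} (\<lambda>\<tau>. F (z \<tau>) - F (z t))) \<le> (K * (M * h)) * (t + h - t)"
    by (rule int_const_bound[OF th cd bd])
  then show ?thesis unfolding eq by (simp add: power2_eq_square mult.assoc)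
qed

end



lemma hvd_cmul: "(f has_vector_derivative f') F \<Longrightarrow> ((\<lambda>x. c *\<^sub>R f x) has_vector_derivative c *\<^sub>R f') F"
  by (rule bounded_linear.has_vector_derivative[OF bounded_linear_scaleR_right])

lemma hvd_fst: "(f has_vector_derivative f') F \<Longrightarrow> ((\<lambda>x. fst (f x)) has_vector_derivative fst f') F"
  by (rule bounded_linear.has_vector_derivative[OF bounded_linear_fst])

lemma hvd_snd: "(f has_vector_derivative f') F \<Longrightarrow> ((\<lambda>x. snd (f x)) has_vector_derivative snd f') F"
  by (rule bounded_linear.has_vector_derivative[OF bounded_linear_snd])

lemma chain_g:
  fixes g :: "real^'n \<Rightarrow> real^'n" and H :: "real^'n \<Rightarrow> real^'n^'n"
  assumes gd: "\<And>x. (g has_derivative (\<lambda>v. H x *v v)) (at x)"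
    and Y: "(Y has_vector_derivative Y') (at t within S)"
  shows "((\<lambda>t. g (Y t)) has_vector_derivative (H (Y t) *v Y')) (at t within S)"
proof -
  have "((\<lambda>t. g (Y t)) has_derivative (\<lambda>r. H (Y t) *v (r *\<^sub>R Y'))) (at t within S)"
    by (rule has_derivative_compose[OF Y[unfolded has_vector_derivative_def] gd])
  then show ?thesis by (simp add: has_vector_derivative_def matrix_vector_mult_scaleR)
qed

lemma bb_mv: "bounded_bilinear (\<lambda>(A::real^'n^'m) (v::real^'n). A *v v)"
proof -
  have "bilinear (\<lambda>(A::real^'n^'m) (v::real^'n). A *v v)"
    unfolding bilinear_def
  proof (intro conjI allI)
    fix A :: "real^'n^'m" show "linear (\<lambda>v. A *v v)" by (rule matrix_vector_mul_linear)
  next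
    fix v :: "real^'n" show "linear (\<lambda>A::real^'n^'m. A *v v)"
      by (rule linearI) (simp_all add: matrix_vector_mult_add_rdistrib scaleR_matrix_vector_assoc)
  qed
  then show ?thesis by (simp add: bilinear_conv_bounded_bilinear)
qed

definition aa :: "real \<Rightarrow> real \<Rightarrow> real \<Rightarrow> real" where
  "aa \<mu> \<beta> h = 2 * sqrt \<mu> * \<beta> * h - 1 - sqrt \<mu> * h"

definition FF :: "real \<Rightarrow> real \<Rightarrow> (real^'n \<Rightarrow> real^'n) \<Rightarrow> real \<Rightarrow> ((real^'n) \<times> (real^'n)) \<Rightarrow> ((real^'n) \<times> (real^'n))" where
  "FF \<mu> \<beta> g h z = (snd z - (\<beta>*h) *\<^sub>R g (fst z), (-(2* sqrt \<mu>)) *\<^sub>R snd z + aa \<mu> \<beta> h *\<^sub>R g (fst z))"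

definition KK :: "real \<Rightarrow> real \<Rightarrow> real \<Rightarrow> real \<Rightarrow> real" where
  "KK \<mu> \<beta> L h = 1 + \<beta>*h*L + 2* sqrt \<mu> + \<bar>aa \<mu> \<beta> h\<bar> * L"

definition zz0 :: "real \<Rightarrow> real \<Rightarrow> (real^'n \<Rightarrow> real^'n) \<Rightarrow> real^'n \<Rightarrow> real \<Rightarrow> (real^'n) \<times> (real^'n)" where
  "zz0 \<mu> \<beta> g x0 h = (x0, (\<beta>*h - 2*h/(1 + sqrt \<mu> * h)) *\<^sub>R g x0)"

lemma FF_lipF:
  fixes g :: "real^'n \<Rightarrow> real^'n"
  assumes L: "0 \<le> L" and \<beta>: "0 \<le> \<beta>" and h: "0 \<le> h" and \<mu>: "0 < \<mu>"
    and glip: "\<And>x y. norm (g x - g y) \<le> L * norm (x - y)"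
  shows "lipF (FF \<mu> \<beta> g h) (KK \<mu> \<beta> L h)"
proof
  show "0 < KK \<mu> \<beta> L h" unfolding KK_def using L \<beta> h \<mu>
    by (intro add_pos_nonneg) (auto intro: mult_nonneg_nonneg)
  fix z z' :: "(real^'n) \<times> (real^'n)"
  obtain X y where zz: "z = (X,y)" by fastforce
  obtain X' y' where zz': "z' = (X',y')" by fastforce
  let ?a = "aa \<mu> \<beta> h"
  let ?n = "norm (z - z')"
  have nX: "norm (X - X') \<le> ?n" and ny: "norm (y - y') \<le> ?n"
    using norm_fst_le[of "X - X'" "y - y'"] norm_snd_le[of "y - y'" "X - X'"] zz zz' by auto
  have gb: "norm (g X - g X') \<le> L * ?n" using glip[of X X'] nX L by (meson mult_left_mono order_trans)
  have eq: "FF \<mu> \<beta> g h z - FF \<mu> \<beta> g h z' = ((y - y') - (\<beta>*h) *\<^sub>R (g X - g X'), (-(2* sqrt \<mu>)) *\<^sub>R (y - y') + ?a *\<^sub>R (g X - g X'))"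
    unfolding FF_def zz zz' by (simp add: algebra_simps)
  have e1: "norm ((y - y') - (\<beta>*h) *\<^sub>R (g X - g X')) \<le> norm (y-y') + \<beta>*h * norm (g X - g X')"
    using norm_triangle_ineq4[of "y-y'" "(\<beta>*h) *\<^sub>R (g X - g X')"] \<beta> h by simp
  have e2: "norm ((-(2* sqrt \<mu>)) *\<^sub>R (y - y') + ?a *\<^sub>R (g X - g X')) \<le> 2* sqrt \<mu> * norm (y - y') + \<bar>?a\<bar> * norm (g X - g X')"
    using norm_triangle_ineq[of "(-(2* sqrt \<mu>)) *\<^sub>R (y - y')" "?a *\<^sub>R (g X - g X')"] \<mu> by simp
  have f1: "\<beta>*h * norm (g X - g X') \<le> \<beta>*h * (L * ?n)" using gb \<beta> h by (simp add: mult_left_mono)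
  have f2: "2* sqrt \<mu> * norm (y - y') \<le> 2* sqrt \<mu> * ?n" using ny \<mu> by (simp add: mult_left_mono)
  have f3: "\<bar>?a\<bar> * norm (g X - g X') \<le> \<bar>?a\<bar> * (L * ?n)" using gb by (simp add: mult_left_mono)
  have "norm (FF \<mu> \<beta> g h z - FF \<mu> \<beta> g h z') \<le> norm ((y - y') - (\<beta>*h) *\<^sub>R (g X - g X')) + norm ((-(2* sqrt \<mu>)) *\<^sub>R (y - y') + ?a *\<^sub>R (g X - g X'))"
    unfolding eq by (rule norm_Pair_le)
  also have "\<dots> \<le> KK \<mu> \<beta> L h * ?n"
    using e1 e2 f1 f2 f3 ny unfolding KK_def by (simp add: algebra_simps)
  finally show "norm (FF \<mu> \<beta> g h z - FF \<mu> \<beta> g h z') \<le> KK \<mu> \<beta> L h * norm (z - z')" .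
qed

lemma HR_isol:
  fixes g :: "real^'n \<Rightarrow> real^'n" and H :: "real^'n \<Rightarrow> real^'n^'n"
  assumes \<mu>: "0 < \<mu>" and s: "0 < s" and gd: "\<And>x. (g has_derivative (\<lambda>v. H x *v v)) (at x)"
    and Y: "HR_solution \<mu> \<beta> s g H x0 Y"
  shows "\<exists>w. isol (FF \<mu> \<beta> g (sqrt s)) (zz0 \<mu> \<beta> g x0 (sqrt s)) (\<lambda>t. (Y t, w t))"
proof -
  define h where "h = sqrt s"
  have hs: "sqrt s = h" unfolding h_def ..
  have sq: "sqrt (\<mu> * s) = sqrt \<mu> * h" unfolding h_def by (simp add: real_sqrt_mult)
  obtain Y' Y'' where d1: "\<forall>t\<ge>0. (Y has_vector_derivative Y' t) (at t within {0..})"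
    and d2: "\<forall>t\<ge>0. (Y' has_vector_derivative Y'' t) (at t within {0..})"
    and ode: "\<forall>t\<ge>0. Y'' t + (2 * sqrt \<mu>) *\<^sub>R Y' t + (\<beta> * sqrt s) *\<^sub>R (H (Y t) *v Y' t)
                   + (1 + sqrt (\<mu> * s)) *\<^sub>R g (Y t) = 0"
    and i1: "Y 0 = x0" and i2: "Y' 0 = - ((2 * sqrt s) / (1 + sqrt (\<mu> * s))) *\<^sub>R g x0"
    using Y unfolding HR_solution_def by blast
  define w where "w t = Y' t + (\<beta>*h) *\<^sub>R g (Y t)" for t
  let ?z = "\<lambda>t. (Y t, w t)"
  have dz: "(?z has_vector_derivative FF \<mu> \<beta> g h (?z t)) (at t within {0..})" if t: "0 \<le> t" for t
  proof -
    have dg: "((\<lambda>t. g (Y t)) has_vector_derivative H (Y t) *v Y' t) (at t within {0..})"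
      by (rule chain_g[OF gd d1[rule_format, OF t]])
    have D: "(?z has_vector_derivative (Y' t, Y'' t + (\<beta>*h) *\<^sub>R (H (Y t) *v Y' t))) (at t within {0..})"
      unfolding w_def
      by (intro has_vector_derivative_Pair d1[rule_format, OF t] has_vector_derivative_add
          d2[rule_format, OF t] hvd_cmul dg)
    have "Y'' t + (\<beta>*h) *\<^sub>R (H (Y t) *v Y' t) - ((-(2* sqrt \<mu>)) *\<^sub>R w t + aa \<mu> \<beta> h *\<^sub>R g (Y t))
       = Y'' t + (2 * sqrt \<mu>) *\<^sub>R Y' t + (\<beta> * sqrt s) *\<^sub>R (H (Y t) *v Y' t) + (1 + sqrt (\<mu> * s)) *\<^sub>R g (Y t)"
      unfolding w_def aa_def sq hs by (simp add: algebra_simps)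
    also have "\<dots> = 0" using ode t by blast
    finally have "Y'' t + (\<beta>*h) *\<^sub>R (H (Y t) *v Y' t) = (-(2* sqrt \<mu>)) *\<^sub>R w t + aa \<mu> \<beta> h *\<^sub>R g (Y t)"
      by simp
    moreover have "Y' t = w t - (\<beta>*h) *\<^sub>R g (Y t)" unfolding w_def by simp
    ultimately have "(Y' t, Y'' t + (\<beta>*h) *\<^sub>R (H (Y t) *v Y' t)) = FF \<mu> \<beta> g h (?z t)"
      unfolding FF_def by simp
    then show ?thesis using D by simp
  qed
  have cz: "continuous_on {0..} ?z"
    unfolding continuous_on_eq_continuous_within
    by (auto intro!: has_vector_derivative_continuous[OF dz])
  have z0: "?z 0 = zz0 \<mu> \<beta> g x0 h"
    unfolding zz0_def w_def i1 i2 sq hs by (simp add: algebra_simps)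
  have "\<forall>t\<ge>0. ?z t = zz0 \<mu> \<beta> g x0 h + integral {0..t} (\<lambda>\<tau>. FF \<mu> \<beta> g h (?z \<tau>))"
    using deriv_to_int[OF dz] z0 by auto
  then show ?thesis using cz unfolding isol_def h_def by blast
qed


lemma exist_sol:
  fixes g :: "real^'n \<Rightarrow> real^'n" and H :: "real^'n \<Rightarrow> real^'n^'n"
  assumes \<mu>: "0 < \<mu>" and s: "0 < s" and \<beta>: "0 \<le> \<beta>" and L: "0 \<le> L"
    and glip: "\<And>x y. norm (g x - g y) \<le> L * norm (x - y)"
    and gd: "\<And>x. (g has_derivative (\<lambda>v. H x *v v)) (at x)"
    and Hc: "continuous_on UNIV H"
  shows "\<exists>X. HR_solution \<mu> \<beta> s g H x0 X"
proof -
  define h where "h = sqrt s"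
  have hs: "sqrt s = h" unfolding h_def ..
  have h0: "0 \<le> h" unfolding h_def using s by simp
  have sq: "sqrt (\<mu> * s) = sqrt \<mu> * h" unfolding h_def by (simp add: real_sqrt_mult)
  let ?F = "FF \<mu> \<beta> g h"
  interpret lipF ?F "KK \<mu> \<beta> L h" by (rule FF_lipF[OF L \<beta> h0 \<mu> glip])
  obtain z where z: "isol ?F (zz0 \<mu> \<beta> g x0 h) z" and zc: "continuous_on UNIV z"
    using isol_exists by blast
  have gc: "continuous_on UNIV g"
    by (rule continuous_at_imp_continuous_on) (use gd has_derivative_continuous in blast)
  have dz: "(z has_vector_derivative ?F (z t)) (at t within {0..})" if t: "0 \<le> t" for t
  proof -
    have cF: "continuous_on {0..} (\<lambda>\<tau>. ?F (z \<tau>))"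
      by (intro continuous_on_compose2[OF F_cont[of UNIV]] continuous_on_subset[OF zc]) auto
    have "((\<lambda>u. zz0 \<mu> \<beta> g x0 h + integral {0..u} (\<lambda>\<tau>. ?F (z \<tau>))) has_vector_derivative ?F (z t)) (at t within {0..})"
      using has_vector_derivative_add[OF has_vector_derivative_const int_deriv[OF cF t]] by simp
    then show ?thesis
      by (rule has_vector_derivative_transform[rotated 2]) (use t z in \<open>auto simp: isol_def\<close>)
  qed
  define X where "X t = fst (z t)" for t
  define w where "w t = snd (z t)" for t
  define X' where "X' t = w t - (\<beta>*h) *\<^sub>R g (X t)" for t
  define X'' where "X'' t = snd (?F (z t)) - (\<beta>*h) *\<^sub>R (H (X t) *v X' t)" for t
  have dX: "(X has_vector_derivative X' t) (at t within {0..})" if t: "0 \<le> t" for t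
    using hvd_fst[OF dz[OF t]] unfolding X_def X'_def w_def FF_def by simp
  have dw: "(w has_vector_derivative snd (?F (z t))) (at t within {0..})" if t: "0 \<le> t" for t
    using hvd_snd[OF dz[OF t]] unfolding w_def by simp
  have dX': "(X' has_vector_derivative X'' t) (at t within {0..})" if t: "0 \<le> t" for t
  proof -
    have D: "((\<lambda>t. w t - (\<beta>*h) *\<^sub>R g (X t)) has_vector_derivative (snd (?F (z t)) - (\<beta>*h) *\<^sub>R (H (X t) *v X' t))) (at t within {0..})"
      by (intro has_vector_derivative_diff dw[OF t] hvd_cmul chain_g[OF gd dX[OF t]])
    then show ?thesis unfolding X''_def by (rule has_vector_derivative_transform[rotated 2]) (use t in \<open>auto simp: X'_def\<close>)
  qed
  have cX: "continuous_on UNIV X" unfolding X_def by (intro continuous_intros zc)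
  have cw: "continuous_on UNIV w" unfolding w_def by (intro continuous_intros zc)
  have cgX: "continuous_on UNIV (\<lambda>t. g (X t))" by (rule continuous_on_compose2[OF gc cX]) auto
  have cHX: "continuous_on UNIV (\<lambda>t. H (X t))" by (rule continuous_on_compose2[OF Hc cX]) auto
  have cX': "continuous_on UNIV X'" unfolding X'_def by (intro continuous_intros cw cgX)
  have cFz: "continuous_on UNIV (\<lambda>t. ?F (z t))"
    by (rule continuous_on_compose2[OF F_cont[of UNIV] zc]) auto
  have cX'': "continuous_on {0..} X''" unfolding X''_def
    by (intro continuous_intros bounded_bilinear.continuous_on[OF bb_mv] cHX cX' cFz continuous_on_subset[of UNIV]) auto
  have odeX: "X'' t + (2 * sqrt \<mu>) *\<^sub>R X' t + (\<beta> * sqrt s) *\<^sub>R (H (X t) *v X' t)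
                   + (1 + sqrt (\<mu> * s)) *\<^sub>R g (X t) = 0" for t
    unfolding X''_def X'_def FF_def aa_def sq hs X_def w_def by (simp add: algebra_simps)
  have z0: "z 0 = zz0 \<mu> \<beta> g x0 h" using z unfolding isol_def by auto
  have i1: "X 0 = x0" unfolding X_def z0 zz0_def by simp
  have i2: "X' 0 = - ((2 * sqrt s) / (1 + sqrt (\<mu> * s))) *\<^sub>R g x0"
    unfolding X'_def w_def X_def z0 zz0_def sq hs by (simp add: algebra_simps)
  have "HR_solution \<mu> \<beta> s g H x0 X"
    unfolding HR_solution_def using dX dX' cX'' odeX i1 i2 by blast
  then show ?thesis by blast
qed


lemma HR_pair_eq: "HR_pair \<mu> \<beta> s g x0 k = (HR_seq \<mu> \<beta> s g x0 k, HR_seq \<mu> \<beta> s g x0 (Suc k))"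
  by (simp add: HR_seq_def case_prod_beta Let_def)

lemma HR_seq_0: "HR_seq \<mu> \<beta> s g x0 0 = x0"
  by (simp add: HR_seq_def)

lemma HR_seq_1: "HR_seq \<mu> \<beta> s g x0 (Suc 0) = x0 - ((2 * s) / (1 + sqrt (\<mu> * s))) *\<^sub>R g x0"
  by (simp add: HR_seq_def case_prod_beta Let_def)

lemma HR_seq_SS: "HR_seq \<mu> \<beta> s g x0 (Suc (Suc k)) =
   HR_seq \<mu> \<beta> s g x0 (Suc k)
   + ((1 - sqrt (\<mu> * s)) / (1 + sqrt (\<mu> * s))) *\<^sub>R (HR_seq \<mu> \<beta> s g x0 (Suc k) - HR_seq \<mu> \<beta> s g x0 k)
   - s *\<^sub>R g (HR_seq \<mu> \<beta> s g x0 (Suc k))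
   - (\<beta> * ((1 - sqrt (\<mu> * s)) / (1 + sqrt (\<mu> * s))) * s) *\<^sub>R (g (HR_seq \<mu> \<beta> s g x0 (Suc k)) - g (HR_seq \<mu> \<beta> s g x0 k))"
proof -
  have "HR_seq \<mu> \<beta> s g x0 (Suc (Suc k)) = snd (HR_pair \<mu> \<beta> s g x0 (Suc k))"
    using HR_pair_eq[of \<mu> \<beta> s g x0 "Suc k"] by simp
  then show ?thesis
    by (simp only: HR_pair.simps HR_pair_eq[of \<mu> \<beta> s g x0 k] Let_def case_prod_conv snd_conv)
qed


lemma nfst: "norm (fst p) \<le> norm p"
  using norm_fst_le[of "fst p" "snd p"] by simp

lemma nsnd: "norm (snd p) \<le> norm p"
  using norm_snd_le[of "snd p" "fst p"] by simp

lemma conv_s: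
  fixes g :: "real^'n \<Rightarrow> real^'n" and H :: "real^'n \<Rightarrow> real^'n^'n"
  assumes \<mu>: "0 < \<mu>" and \<beta>: "0 \<le> \<beta>" "\<beta> \<le> 1" and L: "0 \<le> L"
    and glip: "\<And>x y. norm (g x - g y) \<le> L * norm (x - y)"
    and gd: "\<And>x. (g has_derivative (\<lambda>v. H x *v v)) (at x)"
    and s: "0 < s" "s \<le> 1" and T: "0 < T"
    and Y: "HR_solution \<mu> \<beta> s g H x0 Y"
    and k: "real k * sqrt s \<le> T"
    and A1: "A1 = 2 * sqrt \<mu> + 1 + sqrt \<mu>"
    and Kb: "Kb = 1 + L + 2 * sqrt \<mu> + A1 * L"
    and M0: "M0 = (2 * (norm x0 + 3 * norm (g x0)) + (1 + A1) * norm (g 0)) * exp (2 * Kb * T)"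
    and M1: "M1 = norm (g 0) + L * M0"
    and M4: "M4 = (1 + A1) * norm (g 0) + Kb * M0"
    and Ct: "Ct = Kb * M4" and Cs: "Cs = Kb * M4 + A1 * L * M4"
  shows "norm (HR_seq \<mu> \<beta> s g x0 k - Y (real k * sqrt s))
     \<le> T * ((1+L)*Ct + (2*\<mu>)*M0 + (5 * sqrt \<mu>)*M1 + Cs) * exp ((1 + 2*L + L\<^sup>2) * T) * sqrt s"
proof -
  define h where "h = sqrt s"
  have h: "0 < h" "h \<le> 1" unfolding h_def using s by auto
  have hs: "sqrt s = h" unfolding h_def ..
  have sq: "sqrt (\<mu> * s) = sqrt \<mu> * h" unfolding h_def by (simp add: real_sqrt_mult)
  have s2: "s = h\<^sup>2" unfolding h_def using s by simp
  have sm: "0 < sqrt \<mu>" using \<mu> by simp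
  define q where "q = sqrt \<mu> * h"
  have q0: "0 < q" unfolding q_def using sm h by simp
  have den: "0 < 1 + q" using q0 by simp
  have qle: "q \<le> sqrt \<mu>" unfolding q_def using sm h by (simp add: mult_left_le_one_le)
  have qsq: "q\<^sup>2 = \<mu> * h\<^sup>2" unfolding q_def using \<mu> by (simp add: power_mult_distrib)
  have bh: "\<beta> * h \<le> 1" using \<beta> h by (simp add: mult_le_one)
  have bh0: "0 \<le> \<beta> * h" using \<beta> h by simp
  let ?F = "FF \<mu> \<beta> g h"
  let ?K = "KK \<mu> \<beta> L h"
  interpret lipF ?F ?K by (rule FF_lipF[OF L \<beta>(1) _ \<mu> glip]) (use h in simp)
  obtain w where z: "isol ?F (zz0 \<mu> \<beta> g x0 h) (\<lambda>t. (Y t, w t))"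
    using HR_isol[OF \<mu> s(1) gd Y] unfolding h_def by blast
  let ?z = "\<lambda>t. (Y t, w t)"
  have A10: "0 \<le> A1" unfolding A1 using sm by simp
  have Kb0: "0 \<le> Kb" unfolding Kb using A10 L sm by simp
  have aab: "\<bar>aa \<mu> \<beta> h\<bar> \<le> A1"
  proof -
    have "2 * sqrt \<mu> * \<beta> * h = (2 * sqrt \<mu>) * (\<beta> * h)" by simp
    also have "\<dots> \<le> 2 * sqrt \<mu>" using bh sm bh0 by (simp add: mult_left_le_one_le)
    finally have a1: "2 * sqrt \<mu> * \<beta> * h \<le> 2 * sqrt \<mu>" .
    have a2: "0 \<le> 2 * sqrt \<mu> * \<beta> * h" using sm \<beta> h by simp
    have a3: "sqrt \<mu> * h \<le> sqrt \<mu>" "0 < sqrt \<mu> * h" using qle q0 unfolding q_def by auto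
    show ?thesis unfolding aa_def A1 abs_le_iff using a1 a2 a3 by linarith
  qed
  have KK1: "1 \<le> ?K"
  proof -
    have "0 \<le> \<beta>*h*L" using bh0 L by simp
    moreover have "0 \<le> \<bar>aa \<mu> \<beta> h\<bar> * L" using L by simp
    ultimately show ?thesis unfolding KK_def using sm by linarith
  qed
  have KKb: "?K \<le> Kb"
  proof -
    have "\<beta>*h*L \<le> L" using mult_right_mono[OF bh L] by simp
    moreover have "\<bar>aa \<mu> \<beta> h\<bar> * L \<le> A1 * L" using aab L by (simp add: mult_right_mono)
    ultimately show ?thesis unfolding KK_def Kb by linarith
  qed
  have nz0: "norm (zz0 \<mu> \<beta> g x0 h) \<le> norm x0 + 3 * norm (g x0)"
  proof -
    have den1: "1 \<le> 1 + sqrt \<mu> * h" using q0 unfolding q_def by simp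
    have "2*h/(1 + sqrt \<mu> * h) \<le> 2*h/1"
      by (rule divide_left_mono) (use den1 h in auto)
    then have c1: "2*h/(1 + sqrt \<mu> * h) \<le> 2" using h by simp
    have c2: "0 \<le> 2*h/(1 + sqrt \<mu> * h)" using h den1 by simp
    have "\<bar>\<beta>*h - 2*h/(1 + sqrt \<mu> * h)\<bar> \<le> 3" using c1 c2 bh bh0 unfolding abs_le_iff by linarith
    then have "\<bar>\<beta>*h - 2*h/(1 + sqrt \<mu> * h)\<bar> * norm (g x0) \<le> 3 * norm (g x0)"
      by (rule mult_right_mono) simp
    then have "norm ((\<beta>*h - 2*h/(1 + sqrt \<mu> * h)) *\<^sub>R g x0) \<le> 3 * norm (g x0)" by simp
    moreover have "norm (zz0 \<mu> \<beta> g x0 h) \<le> norm x0 + norm ((\<beta>*h - 2*h/(1 + sqrt \<mu> * h)) *\<^sub>R g x0)"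
      unfolding zz0_def by (rule norm_Pair_le)
    ultimately show ?thesis by linarith
  qed
  have nF0: "norm (?F 0) \<le> (1 + A1) * norm (g 0)"
  proof -
    have "?F 0 = (- ((\<beta>*h) *\<^sub>R g 0), aa \<mu> \<beta> h *\<^sub>R g 0)" unfolding FF_def by simp
    then have "norm (?F 0) \<le> norm (- ((\<beta>*h) *\<^sub>R g 0)) + norm (aa \<mu> \<beta> h *\<^sub>R g 0)"
      by (metis norm_Pair_le)
    moreover have "norm (- ((\<beta>*h) *\<^sub>R g 0)) \<le> 1 * norm (g 0)"
      using mult_right_mono[OF bh norm_ge_zero[of "g 0"]] bh0 by simp
    moreover have "norm (aa \<mu> \<beta> h *\<^sub>R g 0) \<le> A1 * norm (g 0)"
      using mult_right_mono[OF aab norm_ge_zero[of "g 0"]] by simp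
    ultimately show ?thesis by (simp add: algebra_simps)
  qed
  have M00: "0 \<le> M0" unfolding M0 using A10 by simp
  have zb: "norm (?z t) \<le> M0" if t: "0 \<le> t" "t \<le> T" for t
  proof -
    have "norm (?z t) \<le> (2 * norm (zz0 \<mu> \<beta> g x0 h) + norm (?F 0) / ?K) * exp (2 * ?K * t)"
      by (rule isol_bound[OF z t(1)])
    also have "\<dots> \<le> (2 * (norm x0 + 3 * norm (g x0)) + (1 + A1) * norm (g 0)) * exp (2 * Kb * T)"
    proof (rule mult_mono)
      have "norm (?F 0) / ?K \<le> norm (?F 0) / 1"
        by (rule divide_left_mono) (use KK1 in auto)
      then show "2 * norm (zz0 \<mu> \<beta> g x0 h) + norm (?F 0) / ?K \<le> 2 * (norm x0 + 3 * norm (g x0)) + (1 + A1) * norm (g 0)"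
        using nz0 nF0 by simp
      have "?K * t \<le> Kb * T" using KKb KK1 t by (intro mult_mono) auto
      then have "2 * (?K * t) \<le> 2 * (Kb * T)" by simp
      then show "exp (2 * ?K * t) \<le> exp (2 * Kb * T)" by (simp add: mult.assoc)
    qed (use A10 in auto)
    finally show ?thesis unfolding M0 .
  qed
  have Yb: "norm (Y t) \<le> M0" if "0 \<le> t" "t \<le> T" for t
    using zb[OF that] norm_fst_le[of "Y t" "w t"] by linarith
  have wb: "norm (w t) \<le> M0" if "0 \<le> t" "t \<le> T" for t
    using zb[OF that] norm_snd_le[of "w t" "Y t"] by linarith
  have gYb: "norm (g (Y t)) \<le> M1" if "0 \<le> t" "t \<le> T" for t
  proof -
    have "norm (g (Y t)) \<le> norm (g 0) + norm (g (Y t) - g 0)" by (metis norm_triangle_sub add.commute)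
    also have "\<dots> \<le> norm (g 0) + L * norm (Y t)" using glip[of "Y t" 0] by simp
    also have "\<dots> \<le> norm (g 0) + L * M0" using Yb[OF that] L by (simp add: mult_left_mono)
    finally show ?thesis unfolding M1 .
  qed
  have Fb: "norm (?F (?z t)) \<le> M4" if "0 \<le> t" "t \<le> T" for t
  proof -
    have "norm (?F (?z t)) \<le> norm (?F 0) + norm (?F (?z t) - ?F 0)" by (metis norm_triangle_sub add.commute)
    also have "\<dots> \<le> norm (?F 0) + ?K * norm (?z t)" using lip[of "?z t" 0] by simp
    also have "\<dots> \<le> (1 + A1) * norm (g 0) + Kb * M0"
    proof -
      have "?K * norm (?z t) \<le> Kb * M0" using zb[OF that] KKb KK1 by (intro mult_mono) auto
      then show ?thesis using nF0 by linarith
    qed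
    finally show ?thesis unfolding M4 .
  qed
  have M40: "0 \<le> M4" unfolding M4 using A10 Kb0 M00 by simp
  define x where "x k = HR_seq \<mu> \<beta> s g x0 k" for k
  define v where "v k = (1/h) *\<^sub>R (x (Suc k) - x k) + (\<beta>*h) *\<^sub>R g (x k)" for k
  define c where "c = (1 - q) / (1 + q)"
  define b where "b = 1 - \<beta> + \<beta> * c"
  have tt: "real (Suc k) * h = real k * h + h" for k by (simp add: algebra_simps)
  have Fb': "norm (?F (?z \<tau>)) \<le> M4" if sk: "real (Suc k) * h \<le> T" and \<tau>: "\<tau> \<in> {real k * h..real k * h + h}" for k \<tau>
  proof (rule Fb)
    show "0 \<le> \<tau>" using \<tau> h by (auto intro: order_trans[rotated])
    show "\<tau> \<le> T" using \<tau> sk unfolding tt by auto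
  qed
  have H1: "norm (Y (real (Suc k) * h) - Y (real k * h) - h *\<^sub>R (w (real k * h) - (\<beta>*h) *\<^sub>R g (Y (real k * h)))) \<le> Ct * h\<^sup>2"
    if sk: "real (Suc k) * h \<le> T" for k
  proof -
    let ?t = "real k * h"
    have t0: "0 \<le> ?t" using h by simp
    have "norm (?z (?t+h) - ?z ?t - h *\<^sub>R ?F (?z ?t)) \<le> ?K * M4 * h\<^sup>2"
      by (rule isol_trunc[OF z t0]) (use h Fb'[OF sk] in auto)
    also have "\<dots> \<le> Ct * h\<^sup>2" unfolding Ct using KKb M40 by (intro mult_right_mono) auto
    finally have "norm (?z (?t+h) - ?z ?t - h *\<^sub>R ?F (?z ?t)) \<le> Ct * h\<^sup>2" .
    moreover have "norm (Y (?t+h) - Y ?t - h *\<^sub>R (w ?t - (\<beta>*h) *\<^sub>R g (Y ?t))) \<le> norm (?z (?t+h) - ?z ?t - h *\<^sub>R ?F (?z ?t))"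
      using nfst[of "?z (?t+h) - ?z ?t - h *\<^sub>R ?F (?z ?t)"] unfolding FF_def by simp
    ultimately show ?thesis unfolding tt by simp
  qed
  have H2: "norm (w (real (Suc k) * h) - w (real k * h) - h *\<^sub>R (aa \<mu> \<beta> h *\<^sub>R g (Y (real (Suc k) * h)) - (2 * sqrt \<mu>) *\<^sub>R w (real k * h))) \<le> Cs * h\<^sup>2"
    if sk: "real (Suc k) * h \<le> T" for k
  proof -
    let ?t = "real k * h"
    let ?a = "aa \<mu> \<beta> h"
    have t0: "0 \<le> ?t" using h by simp
    have "norm (?z (?t+h) - ?z ?t - h *\<^sub>R ?F (?z ?t)) \<le> ?K * M4 * h\<^sup>2"
      by (rule isol_trunc[OF z t0]) (use h Fb'[OF sk] in auto)
    also have "\<dots> \<le> Kb * M4 * h\<^sup>2" using KKb M40 by (intro mult_right_mono) auto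
    finally have r: "norm (?z (?t+h) - ?z ?t - h *\<^sub>R ?F (?z ?t)) \<le> Kb * M4 * h\<^sup>2" .
    have "norm (w (?t+h) - w ?t - h *\<^sub>R ((-(2 * sqrt \<mu>)) *\<^sub>R w ?t + ?a *\<^sub>R g (Y ?t))) \<le> norm (?z (?t+h) - ?z ?t - h *\<^sub>R ?F (?z ?t))"
      using nsnd[of "?z (?t+h) - ?z ?t - h *\<^sub>R ?F (?z ?t)"] unfolding FF_def by simp
    with r have r2: "norm (w (?t+h) - w ?t - h *\<^sub>R ((-(2 * sqrt \<mu>)) *\<^sub>R w ?t + ?a *\<^sub>R g (Y ?t))) \<le> Kb * M4 * h\<^sup>2"
      by linarith
    have dY: "norm (Y (?t+h) - Y ?t) \<le> M4 * h"
    proof -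
      have "norm (?z (?t+h) - ?z ?t) \<le> M4 * (?t + h - ?t)"
        by (rule isol_lip[OF z t0]) (use h Fb'[OF sk] in auto)
      moreover have "norm (Y (?t+h) - Y ?t) \<le> norm (?z (?t+h) - ?z ?t)"
        using nfst[of "?z (?t+h) - ?z ?t"] by simp
      ultimately show ?thesis by simp
    qed
    have gdiff: "norm (g (Y (?t+h)) - g (Y ?t)) \<le> L * (M4 * h)"
      using glip[of "Y (?t+h)" "Y ?t"] mult_left_mono[OF dY L] by linarith
    have dg: "norm ((h * ?a) *\<^sub>R (g (Y (?t+h)) - g (Y ?t))) \<le> A1 * L * M4 * h\<^sup>2"
    proof -
      have "norm ((h * ?a) *\<^sub>R (g (Y (?t+h)) - g (Y ?t))) = h * (\<bar>?a\<bar> * norm (g (Y (?t+h)) - g (Y ?t)))"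
        using h by (simp add: abs_mult)
      also have "\<dots> \<le> h * (A1 * (L * (M4 * h)))"
        by (intro mult_left_mono mult_mono) (use aab gdiff A10 h in auto)
      finally show ?thesis by (simp add: power2_eq_square algebra_simps)
    qed
    have eq: "w (?t+h) - w ?t - h *\<^sub>R (?a *\<^sub>R g (Y (?t+h)) - (2 * sqrt \<mu>) *\<^sub>R w ?t)
       = (w (?t+h) - w ?t - h *\<^sub>R ((-(2 * sqrt \<mu>)) *\<^sub>R w ?t + ?a *\<^sub>R g (Y ?t))) - (h * ?a) *\<^sub>R (g (Y (?t+h)) - g (Y ?t))"
      by (simp add: vec_eq_iff algebra_simps)
    have "norm (w (?t+h) - w ?t - h *\<^sub>R (?a *\<^sub>R g (Y (?t+h)) - (2 * sqrt \<mu>) *\<^sub>R w ?t))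
       \<le> norm (w (?t+h) - w ?t - h *\<^sub>R ((-(2 * sqrt \<mu>)) *\<^sub>R w ?t + ?a *\<^sub>R g (Y ?t))) + norm ((h * ?a) *\<^sub>R (g (Y (?t+h)) - g (Y ?t)))"
      unfolding eq by (rule norm_triangle_ineq4)
    also have "\<dots> \<le> Kb * M4 * h\<^sup>2 + A1 * L * M4 * h\<^sup>2" using r2 dg by linarith
    also have "\<dots> = Cs * h\<^sup>2" unfolding Cs by (simp add: algebra_simps)
    finally show ?thesis unfolding tt .
  qed
  have H3: "norm (w t) \<le> M0 \<and> norm (g (Y t)) \<le> M1" if "0 \<le> t" "t \<le> T" for t
    using wb[OF that] gYb[OF that] by simp
  have cabs: "\<bar>c\<bar> \<le> 1" unfolding c_def using den q0 by (simp add: abs_le_iff divide_le_eq le_divide_eq)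
  have bab: "\<bar>b\<bar> \<le> 1"
  proof -
    have a: "\<bar>\<beta> * c\<bar> \<le> \<beta>" using mult_left_mono[OF cabs \<beta>(1)] \<beta> by (simp add: abs_mult)
    show ?thesis unfolding b_def abs_le_iff using a[unfolded abs_le_iff] \<beta> by linarith
  qed
  have cc: "\<bar>c - 1 + h * (2 * sqrt \<mu>)\<bar> \<le> (2*\<mu>) * h\<^sup>2"
  proof -
    have hq: "h * (2 * sqrt \<mu>) = 2 * q" unfolding q_def by simp
    have e: "c - 1 + h * (2 * sqrt \<mu>) = 2 * q\<^sup>2 / (1 + q)"
      unfolding hq c_def using den by (simp add: field_simps power2_eq_square)
    have "2 * q\<^sup>2 / (1 + q) \<le> 2 * q\<^sup>2 / 1" by (rule divide_left_mono) (use q0 in auto)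
    moreover have "0 \<le> 2 * q\<^sup>2 / (1 + q)" using den by simp
    ultimately show ?thesis unfolding e qsq abs_le_iff by simp
  qed
  have cab: "\<bar>aa \<mu> \<beta> h + b\<bar> \<le> (5 * sqrt \<mu>) * h"
  proof -
    have e: "aa \<mu> \<beta> h + b = 2 * (\<beta> * q) - q - \<beta> * (1 - c)" unfolding aa_def b_def q_def by (simp add: algebra_simps)
    have e1: "1 - c = 2 * q / (1 + q)" unfolding c_def using den by (simp add: field_simps)
    have "2 * q / (1 + q) \<le> 2 * q / 1" by (rule divide_left_mono) (use q0 in auto)
    then have f1: "0 \<le> 1 - c" "1 - c \<le> 2 * q" unfolding e1 using q0 den by auto
    have f2: "0 \<le> \<beta> * (1 - c)" "\<beta> * (1 - c) \<le> 1 - c" using f1 \<beta> by (auto simp: mult_left_le_one_le)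
    have f3: "0 \<le> \<beta> * q" "\<beta> * q \<le> q" using q0 \<beta> by (auto simp: mult_left_le_one_le)
    have "\<bar>aa \<mu> \<beta> h + b\<bar> \<le> 5 * q" unfolding e abs_le_iff using f1 f2 f3 q0 by linarith
    then show ?thesis unfolding q_def by simp
  qed
  have xs: "x (Suc k) = x k + h *\<^sub>R v k - (\<beta>*h\<^sup>2) *\<^sub>R g (x k)" for k
    unfolding v_def using h by (simp add: vec_eq_iff field_simps power2_eq_square)
  have vs: "v (Suc k) = c *\<^sub>R v k - (h*b) *\<^sub>R g (x (Suc k))" for k
  proof -
    have rec: "x (Suc (Suc k)) = x (Suc k) + c *\<^sub>R (x (Suc k) - x k) - h\<^sup>2 *\<^sub>R g (x (Suc k))
        - (\<beta> * c * h\<^sup>2) *\<^sub>R (g (x (Suc k)) - g (x k))"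
      unfolding x_def HR_seq_SS sq c_def q_def s2[symmetric] by simp
    show ?thesis unfolding v_def rec b_def using h
      by (simp add: vec_eq_iff field_simps power2_eq_square)
  qed
  have z0: "?z 0 = zz0 \<mu> \<beta> g x0 h" using z unfolding isol_def by auto
  have x0e: "x 0 = x0" unfolding x_def HR_seq_0 ..
  have i1: "x 0 = Y 0" using z0 unfolding x0e zz0_def by simp
  have i2: "v 0 = w 0"
  proof -
    have w0: "w 0 = (\<beta>*h - 2*h/(1 + sqrt \<mu> * h)) *\<^sub>R g x0" using z0 unfolding zz0_def by simp
    have x1: "x (Suc 0) = x0 - ((2 * h\<^sup>2) / (1 + sqrt \<mu> * h)) *\<^sub>R g x0"
      unfolding x_def HR_seq_1 sq s2[symmetric] by simp
    have den1: "1 + sqrt \<mu> * h \<noteq> 0" using den unfolding q_def by simp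
    show ?thesis unfolding v_def x1 x0e w0 using h den1
      by (simp add: vec_eq_iff field_simps power2_eq_square)
  qed
  have kh: "real k * h \<le> T" using k unfolding hs .
  have cst: "0 \<le> Ct" "0 \<le> Cs" "0 \<le> M1" "0 \<le> 2*\<mu>" "0 \<le> 5 * sqrt \<mu>"
    unfolding Ct Cs M1 using Kb0 M40 A10 L M00 \<mu> by simp_all
  have "norm (x k - Y (real k * h)) \<le> T * ((1+L)*Ct + (2*\<mu>)*M0 + (5 * sqrt \<mu>)*M1 + Cs) * exp ((1 + 2*L + L\<^sup>2) * T) * h"
    by (rule disc_core[OF h(1) h(2) L glip \<beta>(1) \<beta>(2) H1 H2 H3 cabs bab cc cab cst(1) cst(2) M00 cst(3) cst(4) cst(5) xs vs i1 i2 kh])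
  then show ?thesis unfolding x_def hs .
qed


theorem proposition3p6:
  fixes \<mu> \<beta> :: real and x0 :: "real^'n" and f :: "real^'n \<Rightarrow> real"
    and g :: "real^'n \<Rightarrow> real^'n" and H :: "real^'n \<Rightarrow> real^'n^'n"
  assumes "\<mu> > 0" and "0 \<le> \<beta>" and "\<beta> \<le> 1" and "S2_mu \<mu> f g H"
  shows "(\<forall>s>0. \<exists>X. HR_solution \<mu> \<beta> s g H x0 X \<and>
            (\<forall>Y. HR_solution \<mu> \<beta> s g H x0 Y \<longrightarrow> (\<forall>t\<ge>0. Y t = X t)))
         \<and> (\<forall>Xs :: real \<Rightarrow> real \<Rightarrow> real^'n.
              (\<forall>s>0. HR_solution \<mu> \<beta> s g H x0 (Xs s)) \<longrightarrow>
              (\<forall>T>0. Limsup (at_right 0)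
                 (\<lambda>s. ereal (Max ((\<lambda>k. norm (HR_seq \<mu> \<beta> s g x0 k - Xs s (real k * sqrt s)))
                                    ` {k::nat. real k \<le> T / sqrt s}))) = 0))"
proof -
  note \<mu> = assms(1) and \<beta> = assms(2,3)
  obtain L where L\<mu>: "\<mu> \<le> L" and S: "S2_muL \<mu> L f g H" using assms(4) unfolding S2_mu_def by blast
  have L: "0 \<le> L" using L\<mu> \<mu> by simp
  have gd: "\<And>x. (g has_derivative (\<lambda>v. H x *v v)) (at x)" using S unfolding S2_muL_def by blast
  have glip: "\<And>x y. norm (g x - g y) \<le> L * norm (x - y)" using S unfolding S2_muL_def by blast
  obtain L' where L': "L' > 0" "\<And>x y. norm (H x - H y) \<le> L' * norm (x - y)"
    using S unfolding S2_muL_def by blast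
  have Hc: "continuous_on UNIV H"
  proof (rule lipschitz_on_continuous_on)
    show "L'-lipschitz_on UNIV H" by (rule lipschitz_onI) (use L' in \<open>auto simp: dist_norm\<close>)
  qed
  have part1: "\<exists>X. HR_solution \<mu> \<beta> s g H x0 X \<and> (\<forall>Y. HR_solution \<mu> \<beta> s g H x0 Y \<longrightarrow> (\<forall>t\<ge>0. Y t = X t))"
    if s: "0 < s" for s
  proof -
    obtain X where X: "HR_solution \<mu> \<beta> s g H x0 X" using exist_sol[OF \<mu> s \<beta>(1) L glip gd Hc] by blast
    have "Y t = X t" if Y: "HR_solution \<mu> \<beta> s g H x0 Y" and t: "0 \<le> t" for Y t
    proof -
      interpret lipF "FF \<mu> \<beta> g (sqrt s)" "KK \<mu> \<beta> L (sqrt s)"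
        by (rule FF_lipF[OF L \<beta>(1) _ \<mu> glip]) (use s in simp)
      obtain wX where wX: "isol (FF \<mu> \<beta> g (sqrt s)) (zz0 \<mu> \<beta> g x0 (sqrt s)) (\<lambda>t. (X t, wX t))"
        using HR_isol[OF \<mu> s gd X] by blast
      obtain wY where wY: "isol (FF \<mu> \<beta> g (sqrt s)) (zz0 \<mu> \<beta> g x0 (sqrt s)) (\<lambda>t. (Y t, wY t))"
        using HR_isol[OF \<mu> s gd Y] by blast
      show ?thesis using isol_unique[OF wY wX t] by simp
    qed
    then show ?thesis using X by blast
  qed
  have part2: "Limsup (at_right 0)
                 (\<lambda>s. ereal (Max ((\<lambda>k. norm (HR_seq \<mu> \<beta> s g x0 k - Xs s (real k * sqrt s)))
                                    ` {k::nat. real k \<le> T / sqrt s}))) = 0"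
    if Xs: "\<forall>s>0. HR_solution \<mu> \<beta> s g H x0 (Xs s)" and T: "0 < T" for Xs :: "real \<Rightarrow> real \<Rightarrow> real^'n" and T
  proof -
    define A1 where "A1 = 2 * sqrt \<mu> + 1 + sqrt \<mu>"
    define Kb where "Kb = 1 + L + 2 * sqrt \<mu> + A1 * L"
    define M0 where "M0 = (2 * (norm x0 + 3 * norm (g x0)) + (1 + A1) * norm (g 0)) * exp (2 * Kb * T)"
    define M1 where "M1 = norm (g 0) + L * M0"
    define M4 where "M4 = (1 + A1) * norm (g 0) + Kb * M0"
    define Ct where "Ct = Kb * M4"
    define Cs where "Cs = Kb * M4 + A1 * L * M4"
    define D where "D = T * ((1+L)*Ct + (2*\<mu>)*M0 + (5 * sqrt \<mu>)*M1 + Cs) * exp ((1 + 2*L + L\<^sup>2) * T)"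
    define Mx where "Mx s = Max ((\<lambda>k. norm (HR_seq \<mu> \<beta> s g x0 k - Xs s (real k * sqrt s))) ` {k::nat. real k \<le> T / sqrt s})" for s
    have bnd: "0 \<le> Mx s \<and> Mx s \<le> D * sqrt s" if s: "0 < s" "s \<le> 1" for s
    proof -
      let ?S = "{k::nat. real k \<le> T / sqrt s}"
      let ?f = "\<lambda>k. norm (HR_seq \<mu> \<beta> s g x0 k - Xs s (real k * sqrt s))"
      have fin: "finite ?S"
        by (rule finite_subset[of _ "{..nat \<lfloor>T / sqrt s\<rfloor>}"]) (auto intro: le_nat_floor)
      have ne: "0 \<in> ?S" using T s by simp
      have le: "?f k \<le> D * sqrt s" if k: "k \<in> ?S" for k
      proof -
        have "real k * sqrt s \<le> T" using k s by (simp add: le_divide_eq)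
        then show ?thesis unfolding D_def
          by (rule conv_s[OF \<mu> \<beta> L glip gd s T Xs[rule_format, OF s(1)] _ A1_def Kb_def M0_def M1_def M4_def Ct_def Cs_def])
      qed
      have "Mx s \<le> D * sqrt s" unfolding Mx_def
      proof (subst Max_le_iff)
        show "finite (?f ` ?S)" using fin by simp
        show "?f ` ?S \<noteq> {}" using ne by blast
        show "\<forall>a\<in>?f ` ?S. a \<le> D * sqrt s" using le by blast
      qed
      moreover have "?f 0 \<le> Mx s" unfolding Mx_def using Max_ge[OF finite_imageI[OF fin] imageI[OF ne, of ?f]] by simp
      then have "0 \<le> Mx s" using norm_ge_zero order_trans by blast
      ultimately show ?thesis by simp
    qed
    have ev: "eventually (\<lambda>s. 0 \<le> Mx s \<and> Mx s \<le> D * sqrt s) (at_right 0)"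
      unfolding eventually_at_right_field using bnd by (intro exI[of _ 1]) auto
    have lim0: "((\<lambda>s. D * sqrt s) \<longlongrightarrow> 0) (at_right 0)"
    proof -
      have "((\<lambda>s. D * sqrt s) \<longlongrightarrow> D * sqrt 0) (at_right 0)"
        by (intro tendsto_intros)
      then show ?thesis by simp
    qed
    have "(Mx \<longlongrightarrow> 0) (at_right 0)"
      by (rule tendsto_sandwich[OF _ _ tendsto_const lim0]) (use ev in \<open>auto elim: eventually_mono\<close>)
    then have "((\<lambda>s. ereal (Mx s)) \<longlongrightarrow> ereal 0) (at_right 0)" by (rule tendsto_ereal)
    then have "Limsup (at_right 0) (\<lambda>s. ereal (Mx s)) = ereal 0"
      by (rule lim_imp_Limsup[rotated]) simp
    then show ?thesis unfolding Mx_def by (simp add: zero_ereal_def)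
  qed
  show ?thesis using part1 part2 by blast
qed


end
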